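(* Consider the memoryless two-user channel $$Y_1=X_1\exp\!\big(i h_{11}|X_1|^2+i h_{12}|X_2|^2\big)+Z_1,\qquad Y_2=X_2\exp\!\big(i h_{21}|X_1|^2+i h_{22}|X_2|^2\big)+Z_2,$$ with real coefficients $h_{11},h_{22}$ and nonzero real $h_{12},h_{21}$, where $Z_1,Z_2$ are independent circularly-symmetric complex Gaussian with variance $N$, independent of the inputs. Then there exist independent input distributions for $X_1,X_2$ with $\mathbb{E}|X_k|^2\le P^{(k)}$, $|X_1|^2\in\{2\pi m/|h_{21}|:m=1,2,\dots\}$ and $|X_2|^2\in\{2\pi m/|h_{12}|:m=1,2,\dots\}$ almost surely (so that $h_{21}|X_1|^2$ and $h_{12}|X_2|^2$ are integer multiples of $2\pi$, "interference focusing"), such that for $k=1,2$ the achievable rates $R_k=I(X_k;Y_k)$ satisfy $$\liminf_{P^{(1)}/N,\,P^{(2)}/N\to\infty}\frac{R_k}{\log(P^{(k)}/N)}\ge 1,$$ i.e. the pre-log pair $(1,1)$ is achieved. *)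

theory Defs
  imports "HOL-Probability.Probability"
begin

definition cgauss :: "real \<Rightarrow> complex measure" where
  "cgauss N = density lborel (\<lambda>z. ennreal (exp (- ((cmod z)\<^sup>2 / N)) / (pi * N)))"

definition out1 :: "real \<Rightarrow> real \<Rightarrow> complex \<Rightarrow> complex \<Rightarrow> complex \<Rightarrow> complex" where
  "out1 h11 h12 x1 x2 z1 = x1 * cis (h11 * (cmod x1)\<^sup>2 + h12 * (cmod x2)\<^sup>2) + z1"

definition out2 :: "real \<Rightarrow> real \<Rightarrow> complex \<Rightarrow> complex \<Rightarrow> complex \<Rightarrow> complex" where
  "out2 h21 h22 x1 x2 z2 = x2 * cis (h21 * (cmod x1)\<^sup>2 + h22 * (cmod x2)\<^sup>2) + z2"

definition joint :: "complex measure \<Rightarrow> complex measure \<Rightarrow> real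
    \<Rightarrow> (complex \<times> complex \<times> complex \<times> complex) measure" where
  "joint \<mu>1 \<mu>2 N = \<mu>1 \<Otimes>\<^sub>M (\<mu>2 \<Otimes>\<^sub>M (cgauss N \<Otimes>\<^sub>M cgauss N))"

definition rate1 :: "real \<Rightarrow> real \<Rightarrow> real \<Rightarrow> real \<Rightarrow> complex measure \<Rightarrow> complex measure \<Rightarrow> real" where
  "rate1 h11 h12 N b \<mu>1 \<mu>2 = prob_space.mutual_information (joint \<mu>1 \<mu>2 N) b borel borel
     (\<lambda>(x1, x2, z1, z2). x1) (\<lambda>(x1, x2, z1, z2). out1 h11 h12 x1 x2 z1)"

definition rate2 :: "real \<Rightarrow> real \<Rightarrow> real \<Rightarrow> real \<Rightarrow> complex measure \<Rightarrow> complex measure \<Rightarrow> real" where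
  "rate2 h21 h22 N b \<mu>1 \<mu>2 = prob_space.mutual_information (joint \<mu>1 \<mu>2 N) b borel borel
     (\<lambda>(x1, x2, z1, z2). x2) (\<lambda>(x1, x2, z1, z2). out2 h21 h22 x1 x2 z2)"

definition admissible :: "complex measure \<Rightarrow> real \<Rightarrow> real \<Rightarrow> bool" where
  "admissible \<mu> P h \<longleftrightarrow> prob_space \<mu> \<and> sets \<mu> = sets borel \<and>
     (\<integral>\<^sup>+ x. ennreal ((cmod x)\<^sup>2) \<partial>\<mu>) \<le> ennreal P \<and>
     (AE x in \<mu>. \<exists>m::nat. m \<ge> 1 \<and> (cmod x)\<^sup>2 = 2 * pi * real m / \<bar>h\<bar>)"

end

theory Submission
  imports Defs "HOL-Real_Asymp.Real_Asymp"
begin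

lemma lborel_complex: "distr (lborel :: (real \<times> real) measure) borel (\<lambda>p. Complex (fst p) (snd p)) = lborel"
proof (rule lborel_eqI[symmetric])
  fix l u :: complex assume lu: "\<And>b. b \<in> Basis \<Longrightarrow> l \<bullet> b \<le> u \<bullet> b"
  have "(\<lambda>p. Complex (fst p) (snd p)) -` box l u \<inter> space lborel = box (Re l, Im l) (Re u, Im u)"
    by (auto simp: box_def Basis_complex_def Basis_prod_def inner_complex_def mem_box)
  moreover have "(\<lambda>p. Complex (fst p) (snd p)) \<in> measurable lborel borel"
    unfolding Complex_eq measurable_lborel2 by (intro borel_measurable_continuous_onI continuous_intros)
  ultimately show "emeasure (distr lborel borel (\<lambda>p. Complex (fst p) (snd p))) (box l u) = ennreal (\<Prod>b\<in>Basis. (u - l) \<bullet> b)"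
    using lu[of 1] lu[of \<i>]
    by (simp add: emeasure_distr emeasure_lborel_box_eq Basis_complex_def Basis_prod_def inner_complex_def prod.union_disjoint)
qed simp

lemma nn_integral_complex:
  fixes f :: "complex \<Rightarrow> ennreal"
  assumes f[measurable]: "f \<in> borel_measurable borel"
  shows "(\<integral>\<^sup>+ z. f z \<partial>lborel) = (\<integral>\<^sup>+ x. \<integral>\<^sup>+ y. f (Complex x y) \<partial>lborel \<partial>lborel)"
proof -
  have m: "(\<lambda>p. Complex (fst p) (snd p)) \<in> borel_measurable (borel :: (real \<times> real) measure)"
    unfolding Complex_eq by (intro borel_measurable_continuous_onI continuous_intros)
  have "(\<integral>\<^sup>+ z. f z \<partial>lborel) = (\<integral>\<^sup>+ z. f z \<partial>distr (lborel :: (real \<times> real) measure) borel (\<lambda>p. Complex (fst p) (snd p)))"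
    by (simp add: lborel_complex)
  also have "\<dots> = (\<integral>\<^sup>+ p. f (Complex (fst p) (snd p)) \<partial>(lborel :: (real \<times> real) measure))"
    using m by (subst nn_integral_distr) auto
  also have "\<dots> = (\<integral>\<^sup>+ p. f (Complex (fst p) (snd p)) \<partial>(lborel \<Otimes>\<^sub>M lborel))"
    by (simp add: lborel_prod)
  also have "\<dots> = (\<integral>\<^sup>+ x. \<integral>\<^sup>+ y. f (Complex x y) \<partial>lborel \<partial>lborel)"
  proof -
    have "(\<lambda>p. f (Complex (fst p) (snd p))) \<in> borel_measurable (lborel \<Otimes>\<^sub>M lborel)"
      using measurable_compose[OF m f] by (simp add: lborel_prod)
    then show ?thesis by (subst lborel.nn_integral_fst[symmetric]) auto
  qed
  finally show ?thesis .
qed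

definition gd :: "real \<Rightarrow> complex \<Rightarrow> complex \<Rightarrow> real" where
  "gd N c z = exp (- ((cmod (z - c))\<^sup>2 / N)) / (pi * N)"

lemma gd_pos: "N > 0 \<Longrightarrow> gd N c z > 0"
  by (simp add: gd_def)

lemma gd_meas[measurable]: "(\<lambda>z. gd N c z) \<in> borel_measurable borel"
  unfolding gd_def by measurable

lemma nn_integral_nd: "s > 0 \<Longrightarrow> (\<integral>\<^sup>+ x. ennreal (normal_density m s x) \<partial>lborel) = 1"
  by (subst nn_integral_eq_integral) (auto simp: normal_density_nonneg)

lemma nn_integral_gd0:
  assumes N: "N > 0"
  shows "(\<integral>\<^sup>+ z. ennreal (gd N 0 z) \<partial>lborel) = 1"
proof -
  define s where "s = sqrt (N / 2)"
  have s2: "s\<^sup>2 = N / 2" using N by (simp add: s_def)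
  have s0: "s > 0" using N by (simp add: s_def)
  have nd: "normal_density 0 s x = exp (- (x\<^sup>2 / N)) / sqrt (pi * N)" for x
  proof -
    have a: "2 * s\<^sup>2 = N" "2 * pi * s\<^sup>2 = pi * N" using s2 by simp_all
    show ?thesis unfolding normal_density_def a by simp
  qed
  have eq: "gd N 0 (Complex x y) = normal_density 0 s x * normal_density 0 s y" for x y
  proof -
    have e: "exp (- ((x\<^sup>2 + y\<^sup>2) / N)) = exp (- (x\<^sup>2 / N)) * exp (- (y\<^sup>2 / N))"
      by (simp add: exp_add[symmetric] add_divide_distrib)
    have "sqrt (pi * N) * sqrt (pi * N) = pi * N"
      using N by simp
    then show ?thesis
      unfolding nd gd_def using N by (simp add: cmod_power2 e)
  qed
  have "(\<integral>\<^sup>+ z. ennreal (gd N 0 z) \<partial>lborel) =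
      (\<integral>\<^sup>+ x. \<integral>\<^sup>+ y. ennreal (normal_density 0 s x) * ennreal (normal_density 0 s y) \<partial>lborel \<partial>lborel)"
    by (subst nn_integral_complex) (auto simp: eq ennreal_mult normal_density_nonneg)
  also have "\<dots> = (\<integral>\<^sup>+ x. ennreal (normal_density 0 s x) \<partial>lborel)"
    using s0 by (simp add: nn_integral_cmult nn_integral_nd)
  also have "\<dots> = 1" using s0 by (rule nn_integral_nd)
  finally show ?thesis .
qed

lemma nn_integral_translate:
  fixes F :: "complex \<Rightarrow> ennreal"
  assumes [measurable]: "F \<in> borel_measurable borel"
  shows "(\<integral>\<^sup>+ z. F (z - c) \<partial>lborel) = (\<integral>\<^sup>+ z. F z \<partial>lborel)"
proof -
  have "(\<integral>\<^sup>+ z. F (z - c) \<partial>lborel) = (\<integral>\<^sup>+ z. F (z - c) \<partial>distr lborel borel ((+) c))"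
    by (simp add: lborel_distr_plus)
  also have "\<dots> = (\<integral>\<^sup>+ z. F z \<partial>lborel)"
    by (subst nn_integral_distr) auto
  finally show ?thesis .
qed

lemma nn_integral_gd:
  assumes N: "N > 0"
  shows "(\<integral>\<^sup>+ z. ennreal (gd N c z) \<partial>lborel) = 1"
proof -
  have "(\<integral>\<^sup>+ z. ennreal (gd N c z) \<partial>lborel) = (\<integral>\<^sup>+ z. ennreal (gd N 0 (z - c)) \<partial>lborel)"
    by (simp add: gd_def)
  also have "\<dots> = 1"
    using N by (subst nn_integral_translate) (auto simp: nn_integral_gd0)
  finally show ?thesis .
qed

lemma cgauss_gd: "cgauss N = density lborel (\<lambda>z. ennreal (gd N 0 z))"
  by (simp add: cgauss_def gd_def)

lemma prob_space_cgauss: "N > 0 \<Longrightarrow> prob_space (cgauss N)"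
  unfolding cgauss_gd
  by (rule prob_spaceI) (simp add: emeasure_density nn_integral_gd0)

lemma sets_cgauss[simp, measurable_cong]: "sets (cgauss N) = sets borel"
  by (simp add: cgauss_def)

lemma one_plus_sq_le_exp:
  fixes x :: real assumes x: "0 \<le> x"
  shows "1 + x\<^sup>2 \<le> exp x"
proof -
  have a: "1 + x/2 + (x/2)\<^sup>2 / 2 \<le> exp (x/2)"
    using x by (intro exp_lower_Taylor_quadratic) simp
  have b: "0 \<le> 1 + x/2 + (x/2)\<^sup>2 / 2" using x by simp
  have "(1 + x/2 + (x/2)\<^sup>2 / 2)\<^sup>2 \<le> (exp (x/2))\<^sup>2"
    using a b by (intro power_mono) auto
  also have "(exp (x/2))\<^sup>2 = exp x"
    by (simp add: power2_eq_square exp_add[symmetric])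
  finally have c: "(1 + x/2 + (x/2)\<^sup>2 / 2)\<^sup>2 \<le> exp x" .
  have "(1 + x/2 + (x/2)\<^sup>2 / 2)\<^sup>2 - (1 + x\<^sup>2) = x * (((x - 2)\<^sup>2 / 8 + 1/2)) + x^4/64"
    by (simp add: power2_eq_square power4_eq_xxxx field_simps)
  moreover have "0 \<le> x * (((x - 2)\<^sup>2 / 8 + 1/2)) + x^4/64"
    using x by (intro add_nonneg_nonneg mult_nonneg_nonneg) auto
  ultimately show ?thesis using c by linarith
qed

lemma ln_one_plus_le_sqrt:
  fixes t :: real assumes t: "0 \<le> t"
  shows "ln (1 + t) \<le> sqrt t"
proof -
  have "1 + (sqrt t)\<^sup>2 \<le> exp (sqrt t)" using t by (intro one_plus_sq_le_exp) simp
  then have "1 + t \<le> exp (sqrt t)" using t by simp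
  then have "ln (1 + t) \<le> ln (exp (sqrt t))" using t by (subst ln_le_cancel_iff) auto
  then show ?thesis by simp
qed

lemma sqrt_sum_le:
  assumes "finite B" "\<And>b. b \<in> B \<Longrightarrow> 0 \<le> t b"
  shows "sqrt (\<Sum>b\<in>B. t b) \<le> (\<Sum>b\<in>B. sqrt (t b))"
  using assms
proof (induction B rule: finite_induct)
  case (insert x F)
  have "sqrt (\<Sum>b\<in>insert x F. t b) = sqrt (t x + (\<Sum>b\<in>F. t b))"
    using insert by simp
  also have "\<dots> \<le> sqrt (t x) + sqrt (\<Sum>b\<in>F. t b)"
    using insert by (intro sqrt_add_le_add_sqrt sum_nonneg) auto
  also have "\<dots> \<le> sqrt (t x) + (\<Sum>b\<in>F. sqrt (t b))"
    using insert by simp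
  finally show ?case using insert by simp
qed simp

lemma ln_sum_le:
  assumes "finite B" "\<And>b. b \<in> B \<Longrightarrow> 0 \<le> t b"
  shows "ln (1 + (\<Sum>b\<in>B. t b)) \<le> (\<Sum>b\<in>B. sqrt (t b))"
  using ln_one_plus_le_sqrt[of "\<Sum>b\<in>B. t b"] sqrt_sum_le[OF assms] assms
  by (meson order_trans sum_nonneg)

lemma parallelogram_cmod:
  fixes y c d :: complex
  shows "(cmod (y - c))\<^sup>2 + (cmod (y - d))\<^sup>2 = 2 * (cmod (y - (c + d) / 2))\<^sup>2 + (cmod (c - d))\<^sup>2 / 2"
  unfolding cmod_power2 by (simp add: power2_eq_square field_simps)

lemma sqrt_exp: "sqrt (exp t) = exp (t / 2)"
proof -
  have "exp t = (exp (t/2))\<^sup>2" by (simp add: power2_eq_square exp_add[symmetric])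
  then show ?thesis by simp
qed

lemma sqrt_gd_prod:
  assumes N: "N > 0"
  shows "sqrt (gd N c y * gd N d y) = exp (- ((cmod (c - d))\<^sup>2 / (4 * N))) * gd N ((c + d) / 2) y"
proof -
  have "gd N c y * gd N d y = exp (- (((cmod (y - c))\<^sup>2 + (cmod (y - d))\<^sup>2) / N)) / (pi * N)\<^sup>2"
    by (simp add: gd_def power2_eq_square exp_add[symmetric] add_divide_distrib)
  also have "\<dots> = exp (- ((cmod (y - (c + d) / 2))\<^sup>2 / N) * 2 - (cmod (c - d))\<^sup>2 / (4 * N) * 2) / (pi * N)\<^sup>2"
    unfolding parallelogram_cmod using N by (simp add: field_simps)
  finally have e: "gd N c y * gd N d y = exp (- ((cmod (y - (c + d) / 2))\<^sup>2 / N) * 2 - (cmod (c - d))\<^sup>2 / (4 * N) * 2) / (pi * N)\<^sup>2" .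
  have "sqrt (gd N c y * gd N d y) = exp (- ((cmod (y - (c + d) / 2))\<^sup>2 / N) - (cmod (c - d))\<^sup>2 / (4 * N)) / (pi * N)"
    unfolding e using N by (simp add: real_sqrt_divide sqrt_exp)
  also have "\<dots> = exp (- ((cmod (c - d))\<^sup>2 / (4 * N))) * gd N ((c + d) / 2) y"
    by (simp add: gd_def exp_diff exp_minus field_simps)
  finally show ?thesis .
qed

definition unif :: "complex set \<Rightarrow> complex measure" where
  "unif A = distr (measure_pmf (pmf_of_set A)) borel (\<lambda>x. x)"

lemma sets_unif[simp, measurable_cong]: "sets (unif A) = sets borel"
  by (simp add: unif_def)

lemma space_unif[simp]: "space (unif A) = UNIV"
  by (simp add: unif_def)

lemma prob_space_unif: "finite A \<Longrightarrow> A \<noteq> {} \<Longrightarrow> prob_space (unif A)"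
  unfolding unif_def by (intro measure_pmf.prob_space_distr) simp

lemma nn_integral_unif:
  assumes "finite A" "A \<noteq> {}" "F \<in> borel_measurable borel"
  shows "(\<integral>\<^sup>+x. F x \<partial>unif A) = (\<Sum>a\<in>A. F a) / card A"
  using assms unfolding unif_def by (simp add: nn_integral_distr nn_integral_pmf_of_set)

lemma AE_unif:
  assumes "finite A" "A \<noteq> {}"
  shows "AE x in unif A. x \<in> A"
proof -
  have [measurable]: "A \<in> sets borel" using assms by (simp add: finite_imp_closed)
  show ?thesis
    unfolding unif_def using assms
    by (subst AE_distr_iff) (auto simp: AE_measure_pmf_iff)
qed

lemma pw_bounds:
  fixes G :: "'a \<Rightarrow> real"
  assumes A: "finite A" "a \<in> A" and G: "\<And>b. b \<in> A \<Longrightarrow> G b > 0"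
  defines "M \<equiv> real (card A)"
  shows "G a * (log 2 M + 1 / ln 2) - (\<Sum>b\<in>A. sqrt (G a * G b)) / ln 2
           \<le> G a * log 2 (G a / ((\<Sum>b\<in>A. G b) / M))"
    and "G a * log 2 (G a / ((\<Sum>b\<in>A. G b) / M)) \<le> G a * log 2 M"
proof -
  have Ga: "G a > 0" using G A by auto
  have M0: "M > 0" using A unfolding M_def by (auto simp: card_gt_0_iff)
  define B where "B = A - {a}"
  have B: "finite B" "a \<notin> B" "A = insert a B" using A unfolding B_def by auto
  define T where "T = (\<Sum>b\<in>B. G b / G a)"
  have T0: "0 \<le> T" unfolding T_def using G B(3) Ga by (intro sum_nonneg) (auto intro: less_imp_le)
  have sumG: "(\<Sum>b\<in>A. G b) = G a * (1 + T)"
    using B Ga by (simp add: T_def sum_divide_distrib[symmetric] algebra_simps)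
  have sumS: "(\<Sum>b\<in>A. sqrt (G a * G b)) = G a + G a * (\<Sum>b\<in>B. sqrt (G b / G a))"
  proof -
    have "sqrt (G a * G b) = G a * sqrt (G b / G a)" if "b \<in> B" for b
    proof -
      have "G a * G b = (G a)\<^sup>2 * (G b / G a)" using Ga by (simp add: power2_eq_square field_simps)
      then have "sqrt (G a * G b) = sqrt ((G a)\<^sup>2) * sqrt (G b / G a)" by (simp only: real_sqrt_mult)
      then show ?thesis using Ga by simp
    qed
    then show ?thesis
      using B Ga by (simp add: sum_distrib_left real_sqrt_mult[symmetric] power2_eq_square[symmetric])
  qed
  have ln_le: "ln (1 + T) \<le> (\<Sum>b\<in>B. sqrt (G b / G a))"
    unfolding T_def using B G Ga by (intro ln_sum_le) (auto intro: less_imp_le)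
  have q: "G a / ((\<Sum>b\<in>A. G b) / M) = M / (1 + T)"
  proof -
    have "G a / (G a * (1 + T) / M) = (G a * M) / (G a * (1 + T))"
      by (simp add: divide_divide_eq_right)
    also have "\<dots> = M / (1 + T)" using Ga by (rule mult_divide_mult_cancel_left[OF less_imp_neq[symmetric]])
    finally show ?thesis unfolding sumG .
  qed
  have lg: "log 2 (M / (1 + T)) = log 2 M - ln (1 + T) / ln 2"
    using T0 M0 by (simp add: log_def ln_div diff_divide_distrib)
  show "G a * (log 2 M + 1 / ln 2) - (\<Sum>b\<in>A. sqrt (G a * G b)) / ln 2
           \<le> G a * log 2 (G a / ((\<Sum>b\<in>A. G b) / M))"
  proof -
    have "G a * (log 2 M + 1 / ln 2) - (\<Sum>b\<in>A. sqrt (G a * G b)) / ln 2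
        = G a * (log 2 M - (\<Sum>b\<in>B. sqrt (G b / G a)) / ln 2)"
      unfolding sumS by (simp add: field_simps)
    also have "\<dots> \<le> G a * (log 2 M - ln (1 + T) / ln 2)"
      using Ga ln_le by (intro mult_left_mono) (auto intro: divide_right_mono)
    finally show ?thesis unfolding q lg .
  qed
  show "G a * log 2 (G a / ((\<Sum>b\<in>A. G b) / M)) \<le> G a * log 2 M"
    unfolding q using Ga T0 M0 by (intro mult_left_mono) (auto simp: field_simps)
qed

lemma gd_nonneg: "N > 0 \<Longrightarrow> 0 \<le> gd N c z"
  using gd_pos[of N c z] by simp

lemma KL_bound:
  fixes A :: "complex set" and f :: "complex \<Rightarrow> complex" and N \<delta> :: real
  assumes N: "N > 0" and A: "finite A" "A \<noteq> {}" and f[measurable]: "f \<in> borel_measurable borel"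
    and \<delta>0: "0 \<le> \<delta>"
    and \<delta>: "\<And>a b. a \<in> A \<Longrightarrow> b \<in> A \<Longrightarrow> a \<noteq> b \<Longrightarrow> exp (- ((cmod (f a - f b))\<^sup>2 / (4 * N))) \<le> \<delta>"
  shows "log 2 (card A) - card A * \<delta> / ln 2 \<le>
    KL_divergence 2 (density (unif A \<Otimes>\<^sub>M lborel) (\<lambda>p. (\<Sum>b\<in>A. gd N (f b) (snd p)) / card A))
                    (density (unif A \<Otimes>\<^sub>M lborel) (\<lambda>p. gd N (f (fst p)) (snd p)))"
proof -
  interpret U: prob_space "unif A" using A by (rule prob_space_unif)
  interpret UL: pair_sigma_finite "unif A" lborel by unfold_locales
  define \<Omega> where "\<Omega> = unif A \<Otimes>\<^sub>M (lborel :: complex measure)"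
  define M where "M = real (card A)"
  have M0: "M > 0" using A unfolding M_def by (auto simp: card_gt_0_iff)
  define e where "e = (\<lambda>a b. exp (- ((cmod (f a - f b))\<^sup>2 / (4 * N))))"
  define g where "g = (\<lambda>p::complex \<times> complex. gd N (f (fst p)) (snd p))"
  define F where "F = (\<lambda>p::complex \<times> complex. (\<Sum>b\<in>A. gd N (f b) (snd p)) / card A)"
  define S2 where "S2 = (\<lambda>p::complex \<times> complex. \<Sum>b\<in>A. sqrt (g p * gd N (f b) (snd p)))"
  define L where "L = (\<lambda>p. g p * (log 2 M + 1 / ln 2) - S2 p / ln 2)"
  define U where "U = (\<lambda>p. g p * log 2 M)"
  define H where "H = (\<lambda>p. g p * log 2 (g p / F p))"
  have [measurable]: "g \<in> borel_measurable \<Omega>" "F \<in> borel_measurable \<Omega>" "S2 \<in> borel_measurable \<Omega>"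
    unfolding g_def F_def S2_def gd_def \<Omega>_def by measurable
  then have [measurable]: "L \<in> borel_measurable \<Omega>" "U \<in> borel_measurable \<Omega>" "H \<in> borel_measurable \<Omega>"
    unfolding L_def U_def H_def by measurable
  have gpos: "g p > 0" for p unfolding g_def using N by (rule gd_pos)
  have Fpos: "F p > 0" for p
    unfolding F_def using A N by (auto intro!: divide_pos_pos sum_pos gd_pos simp: card_gt_0_iff)
  have Fne: "F p \<noteq> 0" for p using Fpos[of p] by simp
  have KL: "KL_divergence 2 (density \<Omega> F) (density \<Omega> g) = integral\<^sup>L \<Omega> H"
    using gpos Fpos Fne \<open>g \<in> borel_measurable \<Omega>\<close> \<open>F \<in> borel_measurable \<Omega>\<close>
    unfolding H_def \<Omega>_def
    by (intro UL.KL_density_density) (auto simp: less_imp_le intro!: AE_I2 dest: less_imp_neq)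
  have AEA: "AE p in \<Omega>. fst p \<in> A"
    unfolding \<Omega>_def
  proof (rule UL.AE_pair_measure)
    have [measurable]: "A \<in> sets borel" using A by (simp add: finite_imp_closed)
    show "{x \<in> space (unif A \<Otimes>\<^sub>M lborel). fst x \<in> A} \<in> sets (unif A \<Otimes>\<^sub>M lborel)"
      by measurable
    show "AE x in unif A. AE y in lborel. fst (x, y) \<in> A"
      using AE_unif[OF A] by eventually_elim simp
  qed
  have bnds: "AE p in \<Omega>. L p \<le> H p \<and> H p \<le> U p"
    using AEA
  proof eventually_elim
    case (elim p)
    have G: "\<And>b. b \<in> A \<Longrightarrow> gd N (f b) (snd p) > 0" using N by (rule gd_pos)
    note pw = pw_bounds[of A "fst p" "\<lambda>b. gd N (f b) (snd p)", OF A(1) elim G]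
    show ?case
      using pw unfolding L_def U_def H_def S2_def g_def F_def M_def by simp
  qed
  have int_g: "integrable \<Omega> g \<and> integral\<^sup>L \<Omega> g = 1"
  proof -
    have "(\<integral>\<^sup>+ p. ennreal (g p) \<partial>\<Omega>) = (\<integral>\<^sup>+ x. \<integral>\<^sup>+ y. ennreal (gd N (f x) y) \<partial>lborel \<partial>unif A)"
      unfolding \<Omega>_def g_def by (subst lborel.nn_integral_fst[symmetric]) (auto simp: gd_def)
    also have "\<dots> = (\<integral>\<^sup>+ x. 1 \<partial>unif A)"
      using N by (simp add: nn_integral_gd)
    also have "\<dots> = ennreal 1" using U.emeasure_space_1 by simp
    finally show ?thesis using gpos by (subst nn_integral_eq_integrable[symmetric]) (auto intro!: AE_I2 less_imp_le)
  qed
  have int_S2: "integrable \<Omega> S2 \<and> integral\<^sup>L \<Omega> S2 = (\<Sum>a\<in>A. \<Sum>b\<in>A. e a b) / M"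
  proof -
    have sq: "sqrt (gd N (f x) y * gd N (f b) y) = e x b * gd N ((f x + f b) / 2) y" for x y b
      unfolding e_def using N by (rule sqrt_gd_prod)
    have "(\<integral>\<^sup>+ p. ennreal (S2 p) \<partial>\<Omega>) = (\<integral>\<^sup>+ x. \<integral>\<^sup>+ y. ennreal (S2 (x, y)) \<partial>lborel \<partial>unif A)"
      unfolding \<Omega>_def by (subst lborel.nn_integral_fst[symmetric]) (auto simp: \<Omega>_def[symmetric])
    also have "\<dots> = (\<integral>\<^sup>+ x. \<integral>\<^sup>+ y. (\<Sum>b\<in>A. ennreal (e x b * gd N ((f x + f b) / 2) y)) \<partial>lborel \<partial>unif A)"
      unfolding S2_def g_def sq using N
      by (intro nn_integral_cong, subst sum_ennreal) (auto simp: e_def intro!: mult_nonneg_nonneg less_imp_le gd_pos mult_pos_pos)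
    also have "\<dots> = (\<integral>\<^sup>+ x. (\<Sum>b\<in>A. ennreal (e x b)) \<partial>unif A)"
    proof (intro nn_integral_cong)
      fix x
      have "(\<integral>\<^sup>+ y. (\<Sum>b\<in>A. ennreal (e x b * gd N ((f x + f b) / 2) y)) \<partial>lborel)
          = (\<Sum>b\<in>A. \<integral>\<^sup>+ y. ennreal (e x b) * ennreal (gd N ((f x + f b) / 2) y) \<partial>lborel)"
        using N by (subst nn_integral_sum) (auto simp: ennreal_mult e_def gd_nonneg simp del: sum_ennreal)
      also have "\<dots> = (\<Sum>b\<in>A. ennreal (e x b))"
        using N by (simp add: nn_integral_cmult nn_integral_gd del: sum_ennreal)
      finally show "(\<integral>\<^sup>+ y. (\<Sum>b\<in>A. ennreal (e x b * gd N ((f x + f b) / 2) y)) \<partial>lborel)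
          = (\<Sum>b\<in>A. ennreal (e x b))" .
    qed
    also have "\<dots> = (\<Sum>a\<in>A. (\<Sum>b\<in>A. ennreal (e a b))) / card A"
      using A by (subst nn_integral_unif) (auto simp: e_def)
    also have "\<dots> = ennreal ((\<Sum>a\<in>A. \<Sum>b\<in>A. e a b) / M)"
      using M0 unfolding M_def
      by (subst sum_ennreal, simp add: e_def, subst sum_ennreal, simp add: e_def sum_nonneg)
         (simp add: ennreal_of_nat_eq_real_of_nat divide_ennreal e_def sum_nonneg)
    finally have "(\<integral>\<^sup>+ p. ennreal (S2 p) \<partial>\<Omega>) = ennreal ((\<Sum>a\<in>A. \<Sum>b\<in>A. e a b) / M)" .
    moreover have "0 \<le> S2 p" for p unfolding S2_def using gpos[of p] N by (intro sum_nonneg real_sqrt_ge_zero mult_nonneg_nonneg) (auto intro: gd_nonneg)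
    moreover have "0 \<le> (\<Sum>a\<in>A. \<Sum>b\<in>A. e a b) / M" using M0 by (intro divide_nonneg_pos sum_nonneg) (auto simp: e_def)
    ultimately show ?thesis by (subst nn_integral_eq_integrable[symmetric]) auto
  qed
  have sum_e: "(\<Sum>a\<in>A. \<Sum>b\<in>A. e a b) \<le> M * (1 + M * \<delta>)"
  proof -
    have "(\<Sum>b\<in>A. e a b) \<le> 1 + M * \<delta>" if a: "a \<in> A" for a
    proof -
      have "(\<Sum>b\<in>A. e a b) = e a a + (\<Sum>b\<in>A - {a}. e a b)"
        using A a by (simp add: sum.remove)
      also have "(\<Sum>b\<in>A - {a}. e a b) \<le> (\<Sum>b\<in>A - {a}. \<delta>)"
        using a by (intro sum_mono) (auto simp: e_def intro!: \<delta>)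
      also have "\<dots> = real (card (A - {a})) * \<delta>" by simp
      also have "\<dots> \<le> M * \<delta>"
        using \<delta>0 A unfolding M_def by (intro mult_right_mono) (auto intro: card_mono)
      finally show ?thesis by (simp add: e_def)
    qed
    then have "(\<Sum>a\<in>A. \<Sum>b\<in>A. e a b) \<le> (\<Sum>a\<in>A. 1 + M * \<delta>)" by (intro sum_mono)
    also have "\<dots> = M * (1 + M * \<delta>)" by (simp add: M_def)
    finally show ?thesis .
  qed
  have int_L: "integrable \<Omega> L" and int_U: "integrable \<Omega> U"
    unfolding L_def U_def using int_g int_S2 by auto
  have int_H: "integrable \<Omega> H"
  proof (rule Bochner_Integration.integrable_bound[where f="\<lambda>p. \<bar>U p\<bar> + \<bar>L p\<bar>"])
    show "integrable \<Omega> (\<lambda>p. \<bar>U p\<bar> + \<bar>L p\<bar>)" using int_L int_U by auto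
    show "AE p in \<Omega>. norm (H p) \<le> norm (\<bar>U p\<bar> + \<bar>L p\<bar>)"
      using bnds by eventually_elim auto
  qed simp
  have "integral\<^sup>L \<Omega> L \<le> integral\<^sup>L \<Omega> H"
    using int_L int_H bnds by (intro integral_mono_AE) auto
  moreover have "integral\<^sup>L \<Omega> L = (log 2 M + 1 / ln 2) - ((\<Sum>a\<in>A. \<Sum>b\<in>A. e a b) / M) / ln 2"
    unfolding L_def using int_g int_S2 by simp
  moreover have "((\<Sum>a\<in>A. \<Sum>b\<in>A. e a b) / M) / ln 2 \<le> (1 + M * \<delta>) / ln 2"
    using sum_e M0 by (intro divide_right_mono) (auto simp: field_simps)
  ultimately have "log 2 M - M * \<delta> / ln 2 \<le> integral\<^sup>L \<Omega> H"
    by (simp add: add_divide_distrib)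
  then show ?thesis
    using KL unfolding \<Omega>_def F_def g_def M_def by simp
qed

lemma nn_integral_unif':
  assumes "finite A" "A \<noteq> {}" "F \<in> borel_measurable borel"
  shows "(\<integral>\<^sup>+x. F x \<partial>unif A) = ennreal (1 / card A) * (\<Sum>a\<in>A. F a)"
proof -
  have c: "card A > 0" using assms by (auto simp: card_gt_0_iff)
  have "(\<Sum>a\<in>A. F a) / of_nat (card A) = (\<Sum>a\<in>A. F a) * inverse (ennreal (real (card A)))"
    by (simp add: divide_ennreal_def ennreal_of_nat_eq_real_of_nat)
  also have "inverse (ennreal (real (card A))) = ennreal (1 / card A)"
    using c by (simp add: inverse_ennreal inverse_eq_divide)
  finally show ?thesis using assms by (simp add: nn_integral_unif mult.commute)
qed

lemma Q_density:
  fixes A :: "complex set" and f :: "complex \<Rightarrow> complex"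
  assumes N: "N > 0" and A: "finite A" "A \<noteq> {}" and f[measurable]: "f \<in> borel_measurable borel"
  shows "distr (unif A \<Otimes>\<^sub>M cgauss N) (borel \<Otimes>\<^sub>M borel) (\<lambda>(x, z). (x, f x + z))
       = density (unif A \<Otimes>\<^sub>M lborel) (\<lambda>p. gd N (f (fst p)) (snd p))"
proof (rule measure_eqI)
  interpret U: prob_space "unif A" using A by (rule prob_space_unif)
  interpret G: prob_space "cgauss N" using N by (rule prob_space_cgauss)
  interpret UG: pair_sigma_finite "unif A" "cgauss N" by unfold_locales
  interpret UL: pair_sigma_finite "unif A" lborel by unfold_locales
  show "sets (distr (unif A \<Otimes>\<^sub>M cgauss N) (borel \<Otimes>\<^sub>M borel) (\<lambda>(x, z). (x, f x + z))) =
        sets (density (unif A \<Otimes>\<^sub>M lborel) (\<lambda>p. gd N (f (fst p)) (snd p)))"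
    by (simp add: sets_pair_measure_cong[OF sets_unif sets_lborel])
  fix S assume "S \<in> sets (distr (unif A \<Otimes>\<^sub>M cgauss N) (borel \<Otimes>\<^sub>M borel) (\<lambda>(x, z). (x, f x + z)))"
  then have S[measurable]: "S \<in> sets (borel \<Otimes>\<^sub>M borel)" by simp
  have "emeasure (distr (unif A \<Otimes>\<^sub>M cgauss N) (borel \<Otimes>\<^sub>M borel) (\<lambda>(x, z). (x, f x + z))) S
      = (\<integral>\<^sup>+ p. indicator S ((\<lambda>(x, z). (x, f x + z)) p) \<partial>(unif A \<Otimes>\<^sub>M cgauss N))"
  proof -
    have m: "(\<lambda>(x, z). (x, f x + z)) \<in> measurable (unif A \<Otimes>\<^sub>M cgauss N) (borel \<Otimes>\<^sub>M borel)"
      by measurable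
    have "emeasure (distr (unif A \<Otimes>\<^sub>M cgauss N) (borel \<Otimes>\<^sub>M borel) (\<lambda>(x, z). (x, f x + z))) S
        = emeasure (unif A \<Otimes>\<^sub>M cgauss N) ((\<lambda>(x, z). (x, f x + z)) -` S \<inter> space (unif A \<Otimes>\<^sub>M cgauss N))"
      by (rule emeasure_distr[OF m S])
    also have "\<dots> = (\<integral>\<^sup>+ p. indicator ((\<lambda>(x, z). (x, f x + z)) -` S \<inter> space (unif A \<Otimes>\<^sub>M cgauss N)) p \<partial>(unif A \<Otimes>\<^sub>M cgauss N))"
      by (rule nn_integral_indicator[symmetric]) (rule measurable_sets[OF m S])
    also have "\<dots> = (\<integral>\<^sup>+ p. indicator S ((\<lambda>(x, z). (x, f x + z)) p) \<partial>(unif A \<Otimes>\<^sub>M cgauss N))"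
      by (intro nn_integral_cong) (auto simp: indicator_def space_pair_measure)
    finally show ?thesis .
  qed
  also have "\<dots> = (\<integral>\<^sup>+ x. \<integral>\<^sup>+ z. indicator S (x, f x + z) \<partial>cgauss N \<partial>unif A)"
    by (subst G.nn_integral_fst[symmetric]) auto
  also have "\<dots> = (\<integral>\<^sup>+ x. \<integral>\<^sup>+ y. ennreal (gd N (f x) y) * indicator S (x, y) \<partial>lborel \<partial>unif A)"
  proof (intro nn_integral_cong)
    fix x
    have "(\<integral>\<^sup>+ z. indicator S (x, f x + z) \<partial>cgauss N)
        = (\<integral>\<^sup>+ z. ennreal (gd N 0 z) * indicator S (x, f x + z) \<partial>lborel)"
      unfolding cgauss_gd by (subst nn_integral_density) auto
    also have "\<dots> = (\<integral>\<^sup>+ z. (\<lambda>w. ennreal (gd N 0 (w - f x)) * indicator S (x, w)) (f x + z) \<partial>lborel)"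
      by simp
    also have "\<dots> = (\<integral>\<^sup>+ w. ennreal (gd N 0 (w - f x)) * indicator S (x, w) \<partial>lborel)"
    proof -
      have "(\<lambda>w. ennreal (gd N 0 (w - f x)) * indicator S (x, w)) \<in> borel_measurable borel"
        unfolding gd_def by measurable
      note t = nn_integral_translate[OF this, of "- f x"]
      show ?thesis using t by (simp add: algebra_simps)
    qed
    also have "\<dots> = (\<integral>\<^sup>+ y. ennreal (gd N (f x) y) * indicator S (x, y) \<partial>lborel)"
      by (simp add: gd_def)
    finally show "(\<integral>\<^sup>+ z. indicator S (x, f x + z) \<partial>cgauss N)
        = (\<integral>\<^sup>+ y. ennreal (gd N (f x) y) * indicator S (x, y) \<partial>lborel)" .
  qed
  also have "\<dots> = (\<integral>\<^sup>+ p. ennreal (gd N (f (fst p)) (snd p)) * indicator S p \<partial>(unif A \<Otimes>\<^sub>M lborel))"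
    by (subst lborel.nn_integral_fst[symmetric]) (auto simp: gd_def)
  also have "\<dots> = emeasure (density (unif A \<Otimes>\<^sub>M lborel) (\<lambda>p. gd N (f (fst p)) (snd p))) S"
    by (subst emeasure_density) (auto simp: gd_def)
  finally show "emeasure (distr (unif A \<Otimes>\<^sub>M cgauss N) (borel \<Otimes>\<^sub>M borel) (\<lambda>(x, z). (x, f x + z))) S =
      emeasure (density (unif A \<Otimes>\<^sub>M lborel) (\<lambda>p. gd N (f (fst p)) (snd p))) S" .
qed

lemma MI_bound:
  fixes M :: "'a measure" and X Y :: "'a \<Rightarrow> complex" and A :: "complex set" and f :: "complex \<Rightarrow> complex" and N \<delta> :: real
  assumes P: "prob_space M"
    and N: "N > 0" and A: "finite A" "A \<noteq> {}" and f[measurable]: "f \<in> borel_measurable borel"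
    and \<delta>0: "0 \<le> \<delta>"
    and \<delta>: "\<And>a b. a \<in> A \<Longrightarrow> b \<in> A \<Longrightarrow> a \<noteq> b \<Longrightarrow> exp (- ((cmod (f a - f b))\<^sup>2 / (4 * N))) \<le> \<delta>"
    and X[measurable]: "X \<in> borel_measurable M" and Y[measurable]: "Y \<in> borel_measurable M"
    and Q: "distr M (borel \<Otimes>\<^sub>M borel) (\<lambda>\<omega>. (X \<omega>, Y \<omega>)) =
            distr (unif A \<Otimes>\<^sub>M cgauss N) (borel \<Otimes>\<^sub>M borel) (\<lambda>(x, z). (x, f x + z))"
  shows "log 2 (card A) - card A * \<delta> / ln 2 \<le> prob_space.mutual_information M 2 borel borel X Y"
proof -
  interpret prob_space M by (rule P)
  interpret U: prob_space "unif A" using A by (rule prob_space_unif)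
  interpret UL: pair_sigma_finite "unif A" lborel by unfold_locales
  define \<Omega> where "\<Omega> = unif A \<Otimes>\<^sub>M (lborel :: complex measure)"
  define k where "k = (\<lambda>p::complex \<times> complex. gd N (f (fst p)) (snd p))"
  define qy where "qy = (\<lambda>y. (\<Sum>b\<in>A. gd N (f b) y) / card A)"
  have km[measurable]: "k \<in> borel_measurable \<Omega>" unfolding k_def gd_def \<Omega>_def by measurable
  have qym[measurable]: "qy \<in> borel_measurable borel" unfolding qy_def gd_def by measurable
  have QD: "distr M (borel \<Otimes>\<^sub>M borel) (\<lambda>\<omega>. (X \<omega>, Y \<omega>)) = density \<Omega> k"
    unfolding Q \<Omega>_def k_def using N A f by (rule Q_density)
  have sO: "sets \<Omega> = sets (borel \<Otimes>\<^sub>M borel)"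
    unfolding \<Omega>_def by (simp add: sets_pair_measure_cong[OF sets_unif sets_lborel])
  have em: "emeasure (distr (density \<Omega> k) borel h) B
       = (\<integral>\<^sup>+ x. \<integral>\<^sup>+ y. ennreal (k (x, y)) * indicator B (h (x, y)) \<partial>lborel \<partial>unif A)"
    if hm: "h \<in> borel_measurable (borel \<Otimes>\<^sub>M borel)" and B: "B \<in> sets borel" for h :: "complex \<times> complex \<Rightarrow> complex" and B
  proof -
    have hm': "h \<in> measurable (density \<Omega> k) borel" using hm sO by (simp cong: measurable_cong_sets)
    have hm'': "h \<in> borel_measurable \<Omega>" using hm sO by (simp cong: measurable_cong_sets)
    have "emeasure (distr (density \<Omega> k) borel h) B = emeasure (density \<Omega> k) (h -` B \<inter> space (density \<Omega> k))"
      by (rule emeasure_distr[OF hm' B])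
    also have "\<dots> = (\<integral>\<^sup>+ p. ennreal (k p) * indicator (h -` B \<inter> space \<Omega>) p \<partial>\<Omega>)"
      using hm'' B by (subst emeasure_density) auto
    also have "\<dots> = (\<integral>\<^sup>+ p. ennreal (k p) * indicator B (h p) \<partial>\<Omega>)"
      by (intro nn_integral_cong) (auto simp: indicator_def)
    also have "\<dots> = (\<integral>\<^sup>+ x. \<integral>\<^sup>+ y. ennreal (k (x, y)) * indicator B (h (x, y)) \<partial>lborel \<partial>unif A)"
    proof -
      have [measurable]: "h \<in> borel_measurable (unif A \<Otimes>\<^sub>M lborel)" "k \<in> borel_measurable (unif A \<Otimes>\<^sub>M lborel)"
        using hm'' km unfolding \<Omega>_def by auto
      show ?thesis unfolding \<Omega>_def using B by (subst lborel.nn_integral_fst[symmetric]) auto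
    qed
    finally show ?thesis .
  qed
  have DX: "distr M borel X = unif A"
  proof -
    have "distr M borel X = distr (distr M (borel \<Otimes>\<^sub>M borel) (\<lambda>\<omega>. (X \<omega>, Y \<omega>))) borel fst"
      by (subst distr_distr) (auto simp: comp_def)
    also have "\<dots> = unif A"
    proof (rule measure_eqI)
      fix B assume "B \<in> sets (distr (distr M (borel \<Otimes>\<^sub>M borel) (\<lambda>\<omega>. (X \<omega>, Y \<omega>))) borel fst)"
      then have B[measurable]: "B \<in> sets borel" by simp
      have "emeasure (distr (density \<Omega> k) borel fst) B
          = (\<integral>\<^sup>+ x. \<integral>\<^sup>+ y. ennreal (k (x, y)) * indicator B x \<partial>lborel \<partial>unif A)"
        using em[of fst B] by simp
      also have "\<dots> = (\<integral>\<^sup>+ x. indicator B x \<partial>unif A)"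
        unfolding k_def using N
        by (intro nn_integral_cong) (simp add: nn_integral_multc nn_integral_gd)
      also have "\<dots> = emeasure (unif A) B" by simp
      finally show "emeasure (distr (distr M (borel \<Otimes>\<^sub>M borel) (\<lambda>\<omega>. (X \<omega>, Y \<omega>))) borel fst) B = emeasure (unif A) B"
        unfolding QD .
    qed simp
    finally show ?thesis .
  qed
  have DY: "distr M borel Y = density lborel qy"
  proof -
    have "distr M borel Y = distr (distr M (borel \<Otimes>\<^sub>M borel) (\<lambda>\<omega>. (X \<omega>, Y \<omega>))) borel snd"
      by (subst distr_distr) (auto simp: comp_def)
    also have "\<dots> = density lborel qy"
    proof (rule measure_eqI)
      fix B assume "B \<in> sets (distr (distr M (borel \<Otimes>\<^sub>M borel) (\<lambda>\<omega>. (X \<omega>, Y \<omega>))) borel snd)"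
      then have B[measurable]: "B \<in> sets borel" by simp
      have "emeasure (distr (density \<Omega> k) borel snd) B
          = (\<integral>\<^sup>+ x. \<integral>\<^sup>+ y. ennreal (k (x, y)) * indicator B y \<partial>lborel \<partial>unif A)"
        using em[of snd B] by simp
      also have "\<dots> = ennreal (1 / card A) * (\<Sum>a\<in>A. \<integral>\<^sup>+ y. ennreal (gd N (f a) y) * indicator B y \<partial>lborel)"
        unfolding k_def using A by (subst nn_integral_unif') (auto simp: gd_def)
      also have "\<dots> = (\<integral>\<^sup>+ y. ennreal (1 / card A) * (\<Sum>a\<in>A. ennreal (gd N (f a) y) * indicator B y) \<partial>lborel)"
        by (subst nn_integral_cmult) (auto simp: nn_integral_sum gd_def)
      also have "\<dots> = (\<integral>\<^sup>+ y. ennreal (qy y) * indicator B y \<partial>lborel)"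
      proof (intro nn_integral_cong)
        fix y
        have "ennreal (qy y) = ennreal (1 / card A) * ennreal (\<Sum>a\<in>A. gd N (f a) y)"
          unfolding qy_def using N by (subst ennreal_mult[symmetric]) (auto intro!: sum_nonneg gd_nonneg)
        also have "ennreal (\<Sum>a\<in>A. gd N (f a) y) = (\<Sum>a\<in>A. ennreal (gd N (f a) y))"
          using N by (subst sum_ennreal) (auto intro!: gd_nonneg)
        finally show "ennreal (1 / card A) * (\<Sum>a\<in>A. ennreal (gd N (f a) y) * indicator B y) =
            ennreal (qy y) * indicator B y"
          by (simp add: sum_distrib_right mult.assoc del: sum_ennreal)
      qed
      also have "\<dots> = emeasure (density lborel qy) B"
        by (subst emeasure_density) auto
      finally show "emeasure (distr (distr M (borel \<Otimes>\<^sub>M borel) (\<lambda>\<omega>. (X \<omega>, Y \<omega>))) borel snd) B =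
          emeasure (density lborel qy) B"
        unfolding QD .
    qed simp
    finally show ?thesis .
  qed
  interpret D: prob_space "density lborel qy"
    unfolding DY[symmetric] by (rule prob_space_distr) simp
  have PD: "distr M borel X \<Otimes>\<^sub>M distr M borel Y = density \<Omega> (\<lambda>p. qy (snd p))"
    unfolding DX DY
  proof (rule measure_eqI)
    have s1: "sets (unif A \<Otimes>\<^sub>M density lborel qy) = sets (borel \<Otimes>\<^sub>M borel)"
      by (rule sets_pair_measure_cong) simp_all
    show "sets (unif A \<Otimes>\<^sub>M density lborel qy) = sets (density \<Omega> (\<lambda>p. qy (snd p)))"
      unfolding s1 using sO by simp
    fix S assume S0: "S \<in> sets (unif A \<Otimes>\<^sub>M density lborel qy)"
    then have S[measurable]: "S \<in> sets (unif A \<Otimes>\<^sub>M lborel)"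
      using sO s1 unfolding \<Omega>_def by simp
    have "emeasure (unif A \<Otimes>\<^sub>M density lborel qy) S = (\<integral>\<^sup>+ x. emeasure (density lborel qy) (Pair x -` S) \<partial>unif A)"
      by (rule D.emeasure_pair_measure_alt[OF S0])
    also have "\<dots> = (\<integral>\<^sup>+ x. \<integral>\<^sup>+ y. ennreal (qy y) * indicator S (x, y) \<partial>lborel \<partial>unif A)"
    proof (intro nn_integral_cong)
      fix x
      have "Pair x -` S \<in> sets borel"
        using measurable_Pair2'[of x "unif A" lborel] S by (auto simp: space_pair_measure)
      then show "emeasure (density lborel qy) (Pair x -` S) = (\<integral>\<^sup>+ y. ennreal (qy y) * indicator S (x, y) \<partial>lborel)"
        by (subst emeasure_density) (auto simp: indicator_def intro!: nn_integral_cong)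
    qed
    also have "\<dots> = emeasure (density \<Omega> (\<lambda>p. qy (snd p))) S"
      using S0 s1 unfolding \<Omega>_def by (subst emeasure_density) (auto simp: lborel.nn_integral_fst[symmetric])
    finally show "emeasure (unif A \<Otimes>\<^sub>M density lborel qy) S = emeasure (density \<Omega> (\<lambda>p. qy (snd p))) S" .
  qed
  have "prob_space.mutual_information M 2 borel borel X Y
      = KL_divergence 2 (density \<Omega> (\<lambda>p. qy (snd p))) (density \<Omega> k)"
    unfolding mutual_information_def PD QD ..
  also have "log 2 (card A) - card A * \<delta> / ln 2 \<le> \<dots>"
    unfolding \<Omega>_def k_def qy_def using N A f \<delta>0 \<delta> by (rule KL_bound)
  finally show ?thesis by simp
qed

lemma cis_focus:
  fixes h a :: real and m :: nat
  assumes h: "h \<noteq> 0" and x: "(cmod x)\<^sup>2 = 2 * pi * real m / \<bar>h\<bar>"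
  shows "cis (a + h * (cmod x)\<^sup>2) = cis a"
proof -
  have "h * (cmod x)\<^sup>2 = 2 * pi * (sgn h * real m)"
    using h unfolding x by (cases "h > 0") (auto simp: field_simps)
  moreover have "sgn h * real m \<in> \<int>"
    by (cases "h > 0"; cases "h < 0") (auto simp: sgn_if)
  ultimately show ?thesis by (simp add: cis_mult[symmetric])
qed

lemma cis_focus':
  fixes h a :: real and m :: nat
  assumes h: "h \<noteq> 0" and x: "(cmod x)\<^sup>2 = 2 * pi * real m / \<bar>h\<bar>"
  shows "cis (h * (cmod x)\<^sup>2 + a) = cis a"
  using cis_focus[OF assms, of a] by (simp add: add.commute)

lemma nn_integral_joint:
  fixes U V :: "complex measure"
  assumes U: "prob_space U" and V: "prob_space V" and N: "N > 0"
    and sU: "sets U = sets borel" and sV: "sets V = sets borel"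
    and F: "F \<in> borel_measurable (joint U V N)"
  shows "(\<integral>\<^sup>+ \<omega>. F \<omega> \<partial>joint U V N) =
    (\<integral>\<^sup>+ x1. \<integral>\<^sup>+ x2. \<integral>\<^sup>+ z1. \<integral>\<^sup>+ z2. F (x1, x2, z1, z2) \<partial>cgauss N \<partial>cgauss N \<partial>V \<partial>U)"
proof -
  interpret U: prob_space U by (rule U)
  interpret V: prob_space V by (rule V)
  interpret G: prob_space "cgauss N" using N by (rule prob_space_cgauss)
  interpret GG: pair_prob_space "cgauss N" "cgauss N" by unfold_locales
  interpret VGG: pair_prob_space V "cgauss N \<Otimes>\<^sub>M cgauss N" by unfold_locales
  interpret UVGG: pair_prob_space U "V \<Otimes>\<^sub>M (cgauss N \<Otimes>\<^sub>M cgauss N)" by unfold_locales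
  have F1: "F \<in> borel_measurable (U \<Otimes>\<^sub>M (V \<Otimes>\<^sub>M (cgauss N \<Otimes>\<^sub>M cgauss N)))"
    using F by (simp add: joint_def)
  have "(\<integral>\<^sup>+ \<omega>. F \<omega> \<partial>joint U V N) = (\<integral>\<^sup>+ x1. \<integral>\<^sup>+ t. F (x1, t) \<partial>(V \<Otimes>\<^sub>M (cgauss N \<Otimes>\<^sub>M cgauss N)) \<partial>U)"
    unfolding joint_def using F1 by (rule VGG.nn_integral_fst[symmetric])
  also have "\<dots> = (\<integral>\<^sup>+ x1. \<integral>\<^sup>+ x2. \<integral>\<^sup>+ zz. F (x1, x2, zz) \<partial>(cgauss N \<Otimes>\<^sub>M cgauss N) \<partial>V \<partial>U)"
  proof (intro nn_integral_cong)
    fix x1 assume x1: "x1 \<in> space U"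
    have "(\<lambda>t. F (x1, t)) \<in> borel_measurable (V \<Otimes>\<^sub>M (cgauss N \<Otimes>\<^sub>M cgauss N))"
      using F1 x1 by (rule measurable_Pair2)
    then show "(\<integral>\<^sup>+ t. F (x1, t) \<partial>(V \<Otimes>\<^sub>M (cgauss N \<Otimes>\<^sub>M cgauss N))) =
        (\<integral>\<^sup>+ x2. \<integral>\<^sup>+ zz. F (x1, x2, zz) \<partial>(cgauss N \<Otimes>\<^sub>M cgauss N) \<partial>V)"
      by (rule GG.nn_integral_fst[symmetric])
  qed
  also have "\<dots> = (\<integral>\<^sup>+ x1. \<integral>\<^sup>+ x2. \<integral>\<^sup>+ z1. \<integral>\<^sup>+ z2. F (x1, x2, z1, z2) \<partial>cgauss N \<partial>cgauss N \<partial>V \<partial>U)"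
  proof (intro nn_integral_cong)
    fix x1 x2 assume x1: "x1 \<in> space U" and x2: "x2 \<in> space V"
    have "(\<lambda>t. F (x1, t)) \<in> borel_measurable (V \<Otimes>\<^sub>M (cgauss N \<Otimes>\<^sub>M cgauss N))"
      using F1 x1 by (rule measurable_Pair2)
    then have "(\<lambda>zz. F (x1, x2, zz)) \<in> borel_measurable (cgauss N \<Otimes>\<^sub>M cgauss N)"
      using x2 by (rule measurable_Pair2)
    then show "(\<integral>\<^sup>+ zz. F (x1, x2, zz) \<partial>(cgauss N \<Otimes>\<^sub>M cgauss N)) =
        (\<integral>\<^sup>+ z1. \<integral>\<^sup>+ z2. F (x1, x2, z1, z2) \<partial>cgauss N \<partial>cgauss N)"
      by (rule G.nn_integral_fst[symmetric])
  qed
  finally show ?thesis .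
qed

lemma emeasure_distr_ind:
  assumes "\<phi> \<in> measurable M N" "S \<in> sets N"
  shows "emeasure (distr M N \<phi>) S = (\<integral>\<^sup>+ x. indicator S (\<phi> x) \<partial>M)"
proof -
  have "emeasure (distr M N \<phi>) S = emeasure M (\<phi> -` S \<inter> space M)"
    by (rule emeasure_distr[OF assms])
  also have "\<dots> = (\<integral>\<^sup>+ x. indicator (\<phi> -` S \<inter> space M) x \<partial>M)"
    by (rule nn_integral_indicator[symmetric]) (rule measurable_sets[OF assms])
  also have "\<dots> = (\<integral>\<^sup>+ x. indicator S (\<phi> x) \<partial>M)"
    by (intro nn_integral_cong) (auto simp: indicator_def)
  finally show ?thesis .
qed

lemma out1_meas[measurable]: "(\<lambda>(x1, x2, z1, z2). out1 h11 h12 x1 x2 z1) \<in> borel_measurable (borel \<Otimes>\<^sub>M (borel \<Otimes>\<^sub>M (borel \<Otimes>\<^sub>M borel)))"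
  unfolding out1_def cis_conv_exp by measurable

lemma out2_meas[measurable]: "(\<lambda>(x1, x2, z1, z2). out2 h21 h22 x1 x2 z2) \<in> borel_measurable (borel \<Otimes>\<^sub>M (borel \<Otimes>\<^sub>M (borel \<Otimes>\<^sub>M borel)))"
  unfolding out2_def cis_conv_exp by measurable

lemma sets_joint: "sets U = sets borel \<Longrightarrow> sets V = sets borel \<Longrightarrow>
   sets (joint U V N) = sets (borel \<Otimes>\<^sub>M (borel \<Otimes>\<^sub>M (borel \<Otimes>\<^sub>M borel)))"
  unfolding joint_def
  by (intro sets_pair_measure_cong) simp_all

lemma rate1_Q:
  fixes h11 h12 N :: real
  assumes N: "N > 0" and h12: "h12 \<noteq> 0" and A: "finite A" "A \<noteq> {}" and B: "finite B" "B \<noteq> {}"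
    and gB: "\<And>x. x \<in> B \<Longrightarrow> \<exists>m::nat. (cmod x)\<^sup>2 = 2 * pi * real m / \<bar>h12\<bar>"
  shows "distr (joint (unif A) (unif B) N) (borel \<Otimes>\<^sub>M borel)
      (\<lambda>\<omega>. ((\<lambda>(x1, x2, z1, z2). x1) \<omega>, (\<lambda>(x1, x2, z1, z2). out1 h11 h12 x1 x2 z1) \<omega>))
     = distr (unif A \<Otimes>\<^sub>M cgauss N) (borel \<Otimes>\<^sub>M borel) (\<lambda>(x, z). (x, x * cis (h11 * (cmod x)\<^sup>2) + z))"
  (is "distr ?J _ ?\<phi> = distr _ _ ?\<psi>")
proof (rule measure_eqI)
  interpret U: prob_space "unif A" using A by (rule prob_space_unif)
  interpret V: prob_space "unif B" using B by (rule prob_space_unif)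
  interpret G: prob_space "cgauss N" using N by (rule prob_space_cgauss)
  have sJ: "sets ?J = sets (borel \<Otimes>\<^sub>M (borel \<Otimes>\<^sub>M (borel \<Otimes>\<^sub>M borel)))"
    by (rule sets_joint) simp_all
  have m\<phi>: "?\<phi> \<in> measurable ?J (borel \<Otimes>\<^sub>M borel)"
    unfolding measurable_cong_sets[OF sJ refl] by measurable
  have m\<psi>: "?\<psi> \<in> measurable (unif A \<Otimes>\<^sub>M cgauss N) (borel \<Otimes>\<^sub>M borel)"
    unfolding cis_conv_exp measurable_cong_sets[OF sets_pair_measure_cong[OF sets_unif sets_cgauss] refl]
    by measurable
  show "sets (distr ?J (borel \<Otimes>\<^sub>M borel) ?\<phi>) = sets (distr (unif A \<Otimes>\<^sub>M cgauss N) (borel \<Otimes>\<^sub>M borel) ?\<psi>)"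
    by simp
  fix S assume "S \<in> sets (distr ?J (borel \<Otimes>\<^sub>M borel) ?\<phi>)"
  then have S[measurable]: "S \<in> sets (borel \<Otimes>\<^sub>M borel)" by simp
  have "emeasure (distr ?J (borel \<Otimes>\<^sub>M borel) ?\<phi>) S = (\<integral>\<^sup>+ \<omega>. indicator S (?\<phi> \<omega>) \<partial>?J)"
    by (rule emeasure_distr_ind[OF m\<phi> S])
  also have "\<dots> = (\<integral>\<^sup>+ x1. \<integral>\<^sup>+ x2. \<integral>\<^sup>+ z1. \<integral>\<^sup>+ z2. indicator S (x1, out1 h11 h12 x1 x2 z1)
       \<partial>cgauss N \<partial>cgauss N \<partial>unif B \<partial>unif A)"
  proof (subst nn_integral_joint)
    show "(\<lambda>\<omega>. indicator S (?\<phi> \<omega>) :: ennreal) \<in> borel_measurable ?J"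
      using m\<phi> S by measurable
  qed (use N A B in \<open>auto intro: prob_space_unif\<close>)
  also have "\<dots> = (\<integral>\<^sup>+ x1. \<integral>\<^sup>+ x2. \<integral>\<^sup>+ z1. \<integral>\<^sup>+ z2. indicator S (x1, x1 * cis (h11 * (cmod x1)\<^sup>2) + z1)
       \<partial>cgauss N \<partial>cgauss N \<partial>unif B \<partial>unif A)"
  proof (rule nn_integral_cong, rule nn_integral_cong_AE)
    fix x1
    show "AE x2 in unif B. (\<integral>\<^sup>+ z1. \<integral>\<^sup>+ z2. indicator S (x1, out1 h11 h12 x1 x2 z1) \<partial>cgauss N \<partial>cgauss N) =
        (\<integral>\<^sup>+ z1. \<integral>\<^sup>+ z2. indicator S (x1, x1 * cis (h11 * (cmod x1)\<^sup>2) + z1) \<partial>cgauss N \<partial>cgauss N)"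
      using AE_unif[OF B]
    proof eventually_elim
      case (elim x2)
      then obtain m :: nat where "(cmod x2)\<^sup>2 = 2 * pi * real m / \<bar>h12\<bar>" using gB by blast
      then have "out1 h11 h12 x1 x2 z1 = x1 * cis (h11 * (cmod x1)\<^sup>2) + z1" for z1
        unfolding out1_def using cis_focus[OF h12] by simp
      then show ?case by simp
    qed
  qed
  also have "\<dots> = (\<integral>\<^sup>+ x1. \<integral>\<^sup>+ z1. indicator S (x1, x1 * cis (h11 * (cmod x1)\<^sup>2) + z1) \<partial>cgauss N \<partial>unif A)"
    using G.emeasure_space_1 V.emeasure_space_1 by simp
  also have "\<dots> = (\<integral>\<^sup>+ p. indicator S (?\<psi> p) \<partial>(unif A \<Otimes>\<^sub>M cgauss N))"
    using measurable_compose[OF m\<psi> borel_measurable_indicator[OF S]]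
    by (subst G.nn_integral_fst[symmetric]) (auto simp: comp_def)
  also have "\<dots> = emeasure (distr (unif A \<Otimes>\<^sub>M cgauss N) (borel \<Otimes>\<^sub>M borel) ?\<psi>) S"
    by (rule emeasure_distr_ind[OF m\<psi> S, symmetric])
  finally show "emeasure (distr ?J (borel \<Otimes>\<^sub>M borel) ?\<phi>) S = emeasure (distr (unif A \<Otimes>\<^sub>M cgauss N) (borel \<Otimes>\<^sub>M borel) ?\<psi>) S" .
qed

lemma rate2_Q:
  fixes h21 h22 N :: real
  assumes N: "N > 0" and h21: "h21 \<noteq> 0" and A: "finite A" "A \<noteq> {}" and B: "finite B" "B \<noteq> {}"
    and gA: "\<And>x. x \<in> A \<Longrightarrow> \<exists>m::nat. (cmod x)\<^sup>2 = 2 * pi * real m / \<bar>h21\<bar>"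
  shows "distr (joint (unif A) (unif B) N) (borel \<Otimes>\<^sub>M borel)
      (\<lambda>\<omega>. ((\<lambda>(x1, x2, z1, z2). x2) \<omega>, (\<lambda>(x1, x2, z1, z2). out2 h21 h22 x1 x2 z2) \<omega>))
     = distr (unif B \<Otimes>\<^sub>M cgauss N) (borel \<Otimes>\<^sub>M borel) (\<lambda>(x, z). (x, x * cis (h22 * (cmod x)\<^sup>2) + z))"
  (is "distr ?J _ ?\<phi> = distr _ _ ?\<psi>")
proof (rule measure_eqI)
  interpret U: prob_space "unif A" using A by (rule prob_space_unif)
  interpret V: prob_space "unif B" using B by (rule prob_space_unif)
  interpret G: prob_space "cgauss N" using N by (rule prob_space_cgauss)
  have sJ: "sets ?J = sets (borel \<Otimes>\<^sub>M (borel \<Otimes>\<^sub>M (borel \<Otimes>\<^sub>M borel)))"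
    by (rule sets_joint) simp_all
  have m\<phi>: "?\<phi> \<in> measurable ?J (borel \<Otimes>\<^sub>M borel)"
    unfolding measurable_cong_sets[OF sJ refl] by measurable
  have m\<psi>: "?\<psi> \<in> measurable (unif B \<Otimes>\<^sub>M cgauss N) (borel \<Otimes>\<^sub>M borel)"
    unfolding cis_conv_exp measurable_cong_sets[OF sets_pair_measure_cong[OF sets_unif sets_cgauss] refl]
    by measurable
  show "sets (distr ?J (borel \<Otimes>\<^sub>M borel) ?\<phi>) = sets (distr (unif B \<Otimes>\<^sub>M cgauss N) (borel \<Otimes>\<^sub>M borel) ?\<psi>)"
    by simp
  fix S assume "S \<in> sets (distr ?J (borel \<Otimes>\<^sub>M borel) ?\<phi>)"
  then have S[measurable]: "S \<in> sets (borel \<Otimes>\<^sub>M borel)" by simp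
  have "emeasure (distr ?J (borel \<Otimes>\<^sub>M borel) ?\<phi>) S = (\<integral>\<^sup>+ \<omega>. indicator S (?\<phi> \<omega>) \<partial>?J)"
    by (rule emeasure_distr_ind[OF m\<phi> S])
  also have "\<dots> = (\<integral>\<^sup>+ x1. \<integral>\<^sup>+ x2. \<integral>\<^sup>+ z1. \<integral>\<^sup>+ z2. indicator S (x2, out2 h21 h22 x1 x2 z2)
       \<partial>cgauss N \<partial>cgauss N \<partial>unif B \<partial>unif A)"
  proof (subst nn_integral_joint)
    show "(\<lambda>\<omega>. indicator S (?\<phi> \<omega>) :: ennreal) \<in> borel_measurable ?J"
      using m\<phi> S by measurable
  qed (use N A B in \<open>auto intro: prob_space_unif\<close>)
  also have "\<dots> = (\<integral>\<^sup>+ x1. \<integral>\<^sup>+ x2. \<integral>\<^sup>+ z1. \<integral>\<^sup>+ z2. indicator S (x2, x2 * cis (h22 * (cmod x2)\<^sup>2) + z2)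
       \<partial>cgauss N \<partial>cgauss N \<partial>unif B \<partial>unif A)"
  proof (rule nn_integral_cong_AE)
    show "AE x1 in unif A. (\<integral>\<^sup>+ x2. \<integral>\<^sup>+ z1. \<integral>\<^sup>+ z2. indicator S (x2, out2 h21 h22 x1 x2 z2) \<partial>cgauss N \<partial>cgauss N \<partial>unif B) =
        (\<integral>\<^sup>+ x2. \<integral>\<^sup>+ z1. \<integral>\<^sup>+ z2. indicator S (x2, x2 * cis (h22 * (cmod x2)\<^sup>2) + z2) \<partial>cgauss N \<partial>cgauss N \<partial>unif B)"
      using AE_unif[OF A]
    proof eventually_elim
      case (elim x1)
      then obtain m :: nat where "(cmod x1)\<^sup>2 = 2 * pi * real m / \<bar>h21\<bar>" using gA by blast
      then have "out2 h21 h22 x1 x2 z2 = x2 * cis (h22 * (cmod x2)\<^sup>2) + z2" for x2 z2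
        unfolding out2_def using cis_focus'[OF h21] by simp
      then show ?case by simp
    qed
  qed
  also have "\<dots> = (\<integral>\<^sup>+ x2. \<integral>\<^sup>+ z2. indicator S (x2, x2 * cis (h22 * (cmod x2)\<^sup>2) + z2) \<partial>cgauss N \<partial>unif B)"
    using G.emeasure_space_1 U.emeasure_space_1 by simp
  also have "\<dots> = (\<integral>\<^sup>+ p. indicator S (?\<psi> p) \<partial>(unif B \<Otimes>\<^sub>M cgauss N))"
    using measurable_compose[OF m\<psi> borel_measurable_indicator[OF S]]
    by (subst G.nn_integral_fst[symmetric]) (auto simp: comp_def)
  also have "\<dots> = emeasure (distr (unif B \<Otimes>\<^sub>M cgauss N) (borel \<Otimes>\<^sub>M borel) ?\<psi>) S"
    by (rule emeasure_distr_ind[OF m\<psi> S, symmetric])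
  finally show "emeasure (distr ?J (borel \<Otimes>\<^sub>M borel) ?\<phi>) S = emeasure (distr (unif B \<Otimes>\<^sub>M cgauss N) (borel \<Otimes>\<^sub>M borel) ?\<psi>) S" .
qed

lemma prob_space_joint:
  assumes "prob_space U" "prob_space V" "N > 0"
  shows "prob_space (joint U V N)"
proof -
  interpret U: prob_space U by fact
  interpret V: prob_space V by fact
  interpret G: prob_space "cgauss N" using assms(3) by (rule prob_space_cgauss)
  interpret GG: pair_prob_space "cgauss N" "cgauss N" by unfold_locales
  interpret VGG: pair_prob_space V "cgauss N \<Otimes>\<^sub>M cgauss N" by unfold_locales
  interpret UVGG: pair_prob_space U "V \<Otimes>\<^sub>M (cgauss N \<Otimes>\<^sub>M cgauss N)" by unfold_locales
  show ?thesis unfolding joint_def by unfold_locales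
qed

lemma focus_meas[measurable]: "(\<lambda>x. x * cis (h * (cmod x)\<^sup>2)) \<in> borel_measurable borel"
  unfolding cis_conv_exp by measurable

lemma rate1_bound:
  fixes h11 h12 N \<delta> :: real
  assumes N: "N > 0" and h12: "h12 \<noteq> 0" and A: "finite A" "A \<noteq> {}" and B: "finite B" "B \<noteq> {}"
    and gB: "\<And>x. x \<in> B \<Longrightarrow> \<exists>m::nat. (cmod x)\<^sup>2 = 2 * pi * real m / \<bar>h12\<bar>"
    and \<delta>0: "0 \<le> \<delta>"
    and \<delta>: "\<And>a b. a \<in> A \<Longrightarrow> b \<in> A \<Longrightarrow> a \<noteq> b \<Longrightarrow>
       exp (- ((cmod (a * cis (h11 * (cmod a)\<^sup>2) - b * cis (h11 * (cmod b)\<^sup>2)))\<^sup>2 / (4 * N))) \<le> \<delta>"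
  shows "log 2 (card A) - card A * \<delta> / ln 2 \<le> rate1 h11 h12 N 2 (unif A) (unif B)"
  unfolding rate1_def
proof (rule MI_bound[OF _ N A _ \<delta>0 _ _ _ rate1_Q[OF N h12 A B gB]])
  show "prob_space (joint (unif A) (unif B) N)"
    using A B N by (intro prob_space_joint prob_space_unif)
  have sJ: "sets (joint (unif A) (unif B) N) = sets (borel \<Otimes>\<^sub>M (borel \<Otimes>\<^sub>M (borel \<Otimes>\<^sub>M borel)))"
    by (rule sets_joint) simp_all
  show "(\<lambda>(x1, x2, z1, z2). x1) \<in> borel_measurable (joint (unif A) (unif B) N)"
    unfolding measurable_cong_sets[OF sJ refl] by measurable
  show "(\<lambda>(x1, x2, z1, z2). out1 h11 h12 x1 x2 z1) \<in> borel_measurable (joint (unif A) (unif B) N)"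
    unfolding measurable_cong_sets[OF sJ refl] by measurable
qed (use \<delta> in auto)

lemma rate2_bound:
  fixes h21 h22 N \<delta> :: real
  assumes N: "N > 0" and h21: "h21 \<noteq> 0" and A: "finite A" "A \<noteq> {}" and B: "finite B" "B \<noteq> {}"
    and gA: "\<And>x. x \<in> A \<Longrightarrow> \<exists>m::nat. (cmod x)\<^sup>2 = 2 * pi * real m / \<bar>h21\<bar>"
    and \<delta>0: "0 \<le> \<delta>"
    and \<delta>: "\<And>a b. a \<in> B \<Longrightarrow> b \<in> B \<Longrightarrow> a \<noteq> b \<Longrightarrow>
       exp (- ((cmod (a * cis (h22 * (cmod a)\<^sup>2) - b * cis (h22 * (cmod b)\<^sup>2)))\<^sup>2 / (4 * N))) \<le> \<delta>"
  shows "log 2 (card B) - card B * \<delta> / ln 2 \<le> rate2 h21 h22 N 2 (unif A) (unif B)"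
  unfolding rate2_def
proof (rule MI_bound[OF _ N B _ \<delta>0 _ _ _ rate2_Q[OF N h21 A B gA]])
  show "prob_space (joint (unif A) (unif B) N)"
    using A B N by (intro prob_space_joint prob_space_unif)
  have sJ: "sets (joint (unif A) (unif B) N) = sets (borel \<Otimes>\<^sub>M (borel \<Otimes>\<^sub>M (borel \<Otimes>\<^sub>M borel)))"
    by (rule sets_joint) simp_all
  show "(\<lambda>(x1, x2, z1, z2). x2) \<in> borel_measurable (joint (unif A) (unif B) N)"
    unfolding measurable_cong_sets[OF sJ refl] by measurable
  show "(\<lambda>(x1, x2, z1, z2). out2 h21 h22 x1 x2 z2) \<in> borel_measurable (joint (unif A) (unif B) N)"
    unfolding measurable_cong_sets[OF sJ refl] by measurable
qed (use \<delta> in auto)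

lemma sin_lower:
  fixes x :: real assumes "0 \<le> x" "x \<le> 1/2"
  shows "x / 2 \<le> sin x"
proof -
  have "\<bar>sin x - (\<Sum>m<3. sin_coeff m * x ^ m)\<bar> \<le> inverse (fact 3) * \<bar>x\<bar> ^ 3"
    by (rule Maclaurin_sin_bound)
  moreover have "(\<Sum>m<3. sin_coeff m * x ^ m) = x"
    by (simp add: numeral_3_eq_3 sin_coeff_def)
  moreover have "x ^ 3 \<le> x / 4"
  proof -
    have "x ^ 3 = x * x\<^sup>2" by (simp add: power3_eq_cube power2_eq_square)
    also have "x\<^sup>2 \<le> (1/2)\<^sup>2" using assms by (intro power_mono) auto
    then have "x * x\<^sup>2 \<le> x * (1/2)\<^sup>2" using assms by (intro mult_left_mono) auto
    finally show ?thesis by (simp add: power2_eq_square)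
  qed
  ultimately have "\<bar>sin x - x\<bar> \<le> x / 24" using assms by (simp add: fact_numeral)
  then show ?thesis using assms by linarith
qed

lemma chord_sq: "(cmod (cis a - cis b))\<^sup>2 = 4 * (sin ((a - b) / 2))\<^sup>2"
proof -
  have "cis a - cis b = cis b * (cis (a - b) - 1)"
    by (simp add: algebra_simps cis_mult)
  then have "cmod (cis a - cis b) = cmod (cis (a - b) - 1)"
    by (simp add: norm_mult)
  moreover have "(cmod (cis t - 1))\<^sup>2 = 2 - 2 * cos t" for t
  proof -
    have "(cmod (cis t - 1))\<^sup>2 = (cos t - 1)\<^sup>2 + (sin t)\<^sup>2" by (simp add: cmod_power2)
    also have "\<dots> = ((sin t)\<^sup>2 + (cos t)\<^sup>2) - 2 * cos t + 1" by (simp add: power2_eq_square algebra_simps)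
    also have "\<dots> = 2 - 2 * cos t" by simp
    finally show ?thesis .
  qed
  moreover have "cos (a - b) = 1 - 2 * (sin ((a - b) / 2))\<^sup>2"
  proof -
    have "cos (2 * ((a - b) / 2)) = 1 - 2 * (sin ((a - b) / 2))\<^sup>2" by (rule cos_double_sin)
    moreover have "2 * ((a - b) / 2) = a - b" by simp
    ultimately show ?thesis by metis
  qed
  ultimately show ?thesis by simp
qed

definition pt :: "real \<Rightarrow> nat \<Rightarrow> nat \<Rightarrow> nat \<times> nat \<Rightarrow> complex" where
  "pt c s J = (\<lambda>(j, k). complex_of_real (sqrt c * real s * real j) * cis (real k / real J))"

definition cons :: "real \<Rightarrow> nat \<Rightarrow> nat \<Rightarrow> complex set" where
  "cons c s J = pt c s J ` ({J..<2*J} \<times> {0..<J})"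

definition foc :: "real \<Rightarrow> complex \<Rightarrow> complex" where
  "foc h x = x * cis (h * (cmod x)\<^sup>2)"

lemma cmod_pt: "c \<ge> 0 \<Longrightarrow> cmod (pt c s J (j, k)) = sqrt c * real s * real j"
  by (simp add: pt_def norm_mult)

lemma cmod_foc: "cmod (foc h x) = cmod x"
  by (simp add: foc_def norm_mult)

lemma sin_sq_bound:
  fixes J :: nat and k k' :: nat
  assumes J: "J \<ge> 1" and k: "k < J" "k' < J" "k \<noteq> k'"
  shows "1 / (16 * (real J)\<^sup>2) \<le> (sin ((real k / J - real k' / J) / 2))\<^sup>2"
proof -
  define t where "t = \<bar>real k - real k'\<bar> / (2 * J)"
  have Jp: "real J > 0" using J by simp
  have t1: "1 / (2 * J) \<le> t"
    unfolding t_def using k Jp by (intro divide_right_mono) (auto simp: abs_if)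
  have t2: "t \<le> 1/2"
    unfolding t_def using k Jp by (auto simp: field_simps abs_if)
  have t0: "0 \<le> t" unfolding t_def by simp
  have "(real k / J - real k' / J) / 2 = t \<or> (real k / J - real k' / J) / 2 = - t"
    unfolding t_def using Jp by (auto simp: field_simps abs_if)
  then have eq: "(sin ((real k / J - real k' / J) / 2))\<^sup>2 = (sin t)\<^sup>2"
    by auto
  have "1 / (4 * J) \<le> t / 2" using t1 by (simp add: field_simps)
  also have "\<dots> \<le> sin t" using t0 t2 by (rule sin_lower)
  finally have s1: "1 / (4 * J) \<le> sin t" .
  have "(1 / (4 * J))\<^sup>2 \<le> (sin t)\<^sup>2"
    using s1 Jp by (intro power_mono) auto
  then show ?thesis unfolding eq by (simp add: power2_eq_square)
qed

lemma sep_pt: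
  fixes c :: real and s J j j' k k' :: nat
  assumes c: "c > 0" and J: "J \<ge> 1" and j: "J \<le> j" "J \<le> j'" and k: "k < J" "k' < J"
    and ne: "(j, k) \<noteq> (j', k')"
  shows "c * (real s)\<^sup>2 / 4 \<le> (cmod (foc h (pt c s J (j, k)) - foc h (pt c s J (j', k'))))\<^sup>2"
proof -
  define d where "d = sqrt c * real s"
  have d0: "d \<ge> 0" using c by (simp add: d_def)
  have d2: "d\<^sup>2 = c * (real s)\<^sup>2" using c by (simp add: d_def power_mult_distrib)
  show ?thesis
  proof (cases "j = j'")
    case False
    have "d * 1 \<le> d * \<bar>real j - real j'\<bar>"
      using False d0 by (intro mult_left_mono) auto
    also have "\<dots> = \<bar>cmod (foc h (pt c s J (j, k))) - cmod (foc h (pt c s J (j', k')))\<bar>"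
    proof -
      have "sqrt c * real s * real j - sqrt c * real s * real j' = (sqrt c * real s) * (real j - real j')"
        by (simp add: algebra_simps)
      then show ?thesis using c d0 by (simp add: cmod_foc cmod_pt d_def abs_mult)
    qed
    also have "\<dots> \<le> cmod (foc h (pt c s J (j, k)) - foc h (pt c s J (j', k')))"
      by (rule norm_triangle_ineq3)
    finally have "d \<le> cmod (foc h (pt c s J (j, k)) - foc h (pt c s J (j', k')))" by simp
    then have "d\<^sup>2 \<le> (cmod (foc h (pt c s J (j, k)) - foc h (pt c s J (j', k'))))\<^sup>2"
      using d0 by (intro power_mono) auto
    moreover have "0 \<le> c * (real s)\<^sup>2" using c by simp
    ultimately show ?thesis using d2 by linarith
  next
    case True
    then have kk: "k \<noteq> k'" using ne by auto
    define \<rho> where "\<rho> = d * real j"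
    have \<rho>0: "\<rho> \<ge> 0" using d0 by (simp add: \<rho>_def)
    have "foc h (pt c s J (j, k)) - foc h (pt c s J (j', k'))
        = complex_of_real \<rho> * cis (h * \<rho>\<^sup>2) * (cis (real k / J) - cis (real k' / J))"
      using True c \<rho>0 by (simp add: foc_def cmod_pt \<rho>_def d_def) (simp add: pt_def algebra_simps)
    then have "(cmod (foc h (pt c s J (j, k)) - foc h (pt c s J (j', k'))))\<^sup>2
        = \<rho>\<^sup>2 * (4 * (sin ((real k / J - real k' / J) / 2))\<^sup>2)"
      using \<rho>0 by (simp add: norm_mult power_mult_distrib chord_sq)
    also have "\<dots> \<ge> \<rho>\<^sup>2 * (4 * (1 / (16 * (real J)\<^sup>2)))"
      using sin_sq_bound[OF J k kk] by (intro mult_left_mono) auto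
    finally have *: "\<rho>\<^sup>2 / (4 * (real J)\<^sup>2) \<le> (cmod (foc h (pt c s J (j, k)) - foc h (pt c s J (j', k'))))\<^sup>2"
      by simp
    have "d\<^sup>2 / 4 \<le> \<rho>\<^sup>2 / (4 * (real J)\<^sup>2)"
    proof -
      have "d\<^sup>2 * (real J)\<^sup>2 \<le> d\<^sup>2 * (real j)\<^sup>2"
        using j J by (intro mult_left_mono power_mono) auto
      then show ?thesis using J unfolding \<rho>_def by (simp add: field_simps power_mult_distrib)
    qed
    then show ?thesis using * d2 by simp
  qed
qed

lemma finite_cons: "finite (cons c s J)"
  by (simp add: cons_def)

lemma cons_ne: "J \<ge> 1 \<Longrightarrow> cons c s J \<noteq> {}"
  by (auto simp: cons_def)

lemma cons_sep:
  assumes c: "c > 0" and J: "J \<ge> 1" and a: "a \<in> cons c s J" and b: "b \<in> cons c s J" and ne: "a \<noteq> b"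
  shows "c * (real s)\<^sup>2 / 4 \<le> (cmod (foc h a - foc h b))\<^sup>2"
proof -
  obtain j k where a': "a = pt c s J (j, k)" "J \<le> j" "k < J" using a by (auto simp: cons_def)
  obtain j' k' where b': "b = pt c s J (j', k')" "J \<le> j'" "k' < J" using b by (auto simp: cons_def)
  have "(j, k) \<noteq> (j', k')" using ne a' b' by auto
  then show ?thesis unfolding a' b' using sep_pt[OF c J a'(2) b'(2) a'(3) b'(3)] by simp
qed

lemma card_cons:
  assumes c: "c > 0" and J: "J \<ge> 1" and s: "s \<ge> 1"
  shows "card (cons c s J) = J * J"
proof -
  have "inj_on (pt c s J) ({J..<2*J} \<times> {0..<J})"
  proof (rule inj_onI)
    fix x y assume x: "x \<in> {J..<2*J} \<times> {0..<J}" and y: "y \<in> {J..<2*J} \<times> {0..<J}" and e: "pt c s J x = pt c s J y"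
    show "x = y"
    proof (rule ccontr)
      assume "x \<noteq> y"
      obtain j k where "x = (j, k)" by (cases x)
      moreover obtain j' k' where "y = (j', k')" by (cases y)
      ultimately have "c * (real s)\<^sup>2 / 4 \<le> (cmod (foc 0 (pt c s J x) - foc 0 (pt c s J y)))\<^sup>2"
        using sep_pt[OF c J, of j j' k k' s 0] x y \<open>x \<noteq> y\<close> by auto
      moreover have "c * (real s)\<^sup>2 / 4 > 0" using c s by simp
      ultimately show False using e by simp
    qed
  qed
  then show ?thesis unfolding cons_def by (simp add: card_image)
qed

lemma cons_grid:
  assumes c: "c > 0" and s: "s \<ge> 1" and J: "J \<ge> 1" and x: "x \<in> cons c s J"
  shows "\<exists>m::nat. m \<ge> 1 \<and> (cmod x)\<^sup>2 = c * real m"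
proof -
  obtain j k where x': "x = pt c s J (j, k)" "J \<le> j" using x by (auto simp: cons_def)
  have "(cmod x)\<^sup>2 = c * real (s\<^sup>2 * j\<^sup>2)"
    unfolding x'(1) using c by (simp add: cmod_pt power_mult_distrib)
  moreover have "s\<^sup>2 * j\<^sup>2 \<ge> 1" using s J x'(2) by (simp add: Suc_le_eq)
  ultimately show ?thesis by blast
qed

lemma cons_norm:
  assumes c: "c > 0" and x: "x \<in> cons c s J"
  shows "(cmod x)\<^sup>2 \<le> 4 * c * (real s)\<^sup>2 * (real J)\<^sup>2"
proof -
  obtain j k where x': "x = pt c s J (j, k)" "j < 2 * J" using x by (auto simp: cons_def)
  have "(cmod x)\<^sup>2 = c * (real s)\<^sup>2 * (real j)\<^sup>2"
    unfolding x'(1) using c by (simp add: cmod_pt power_mult_distrib)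
  also have "\<dots> \<le> c * (real s)\<^sup>2 * (2 * real J)\<^sup>2"
    using c x'(2) by (intro mult_left_mono power_mono) auto
  finally show ?thesis by (simp add: power_mult_distrib)
qed

lemma admissible_cons:
  fixes h P :: real
  assumes h: "h \<noteq> 0" and s: "s \<ge> 1" and J: "J \<ge> 1"
    and P: "4 * (2 * pi / \<bar>h\<bar>) * (real s)\<^sup>2 * (real J)\<^sup>2 \<le> P"
  shows "admissible (unif (cons (2 * pi / \<bar>h\<bar>) s J)) P h"
proof -
  define c where "c = 2 * pi / \<bar>h\<bar>"
  have c: "c > 0" using h by (simp add: c_def)
  define A where "A = cons c s J"
  have A: "finite A" "A \<noteq> {}" using J by (auto simp: A_def finite_cons cons_ne)
  interpret U: prob_space "unif A" using A by (rule prob_space_unif)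
  have "(\<integral>\<^sup>+ x. ennreal ((cmod x)\<^sup>2) \<partial>unif A) \<le> (\<integral>\<^sup>+ x. ennreal P \<partial>unif A)"
    using AE_unif[OF A]
  proof (rule nn_integral_mono_AE[OF eventually_mono])
    fix x assume "x \<in> A"
    then have "(cmod x)\<^sup>2 \<le> P" using cons_norm[OF c, of x s J] P unfolding A_def c_def by simp
    then show "ennreal ((cmod x)\<^sup>2) \<le> ennreal P" by (rule ennreal_leI)
  qed
  also have "\<dots> = ennreal P" using U.emeasure_space_1 by simp
  finally have pw: "(\<integral>\<^sup>+ x. ennreal ((cmod x)\<^sup>2) \<partial>unif A) \<le> ennreal P" .
  have ae: "AE x in unif A. \<exists>m::nat. m \<ge> 1 \<and> (cmod x)\<^sup>2 = 2 * pi * real m / \<bar>h\<bar>"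
    using AE_unif[OF A]
  proof eventually_elim
    case (elim x)
    then obtain m :: nat where "m \<ge> 1" "(cmod x)\<^sup>2 = c * real m"
      using cons_grid[OF c s J] unfolding A_def by blast
    then show ?case unfolding c_def by auto
  qed
  show ?thesis
    unfolding admissible_def using pw ae U.prob_space_axioms unfolding A_def c_def by simp
qed

lemma cons_choice:
  fixes c N P :: real
  assumes c: "c > 0" and N: "N > 0" and P1: "P \<ge> 1" and H: "16 * (128 * N * ln P + 32 * c) \<le> P"
  defines "s \<equiv> nat \<lceil>sqrt (16 * N * ln P / c)\<rceil> + 1"
  defines "J \<equiv> nat \<lfloor>sqrt (P / (4 * c * (real s)\<^sup>2))\<rfloor>"
  shows "s \<ge> 1" "J \<ge> 1" "4 * c * (real s)\<^sup>2 * (real J)\<^sup>2 \<le> P"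
    and "(ln P - ln (512 * N * ln P + 128 * c)) / ln 2 - 1 / (4 * c * ln 2)
         \<le> log 2 (real (J * J)) - real (J * J) * exp (- (c * (real s)\<^sup>2 / 4 / (4 * N))) / ln 2"
proof -
  define X where "X = 16 * N * ln P / c"
  have lnP: "ln P \<ge> 0" using P1 by simp
  have X0: "X \<ge> 0" unfolding X_def using c N lnP by simp
  have sX: "real s = real_of_int \<lceil>sqrt X\<rceil> + 1"
    unfolding s_def X_def[symmetric] using X0 by simp
  have s_lo: "sqrt X \<le> real s - 1" using sX by linarith
  have s_hi: "real s \<le> sqrt X + 2" using sX by linarith
  show s1: "s \<ge> 1" by (simp add: s_def)
  have sp: "real s > 0" using s1 by simp
  have "X \<le> (real s)\<^sup>2"
  proof -
    have "sqrt X \<le> real s" using s_lo by simp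
    then have "(sqrt X)\<^sup>2 \<le> (real s)\<^sup>2" using X0 by (intro power_mono) auto
    then show ?thesis using X0 by simp
  qed
  then have cs_lo: "16 * N * ln P \<le> c * (real s)\<^sup>2"
    unfolding X_def using c by (simp add: field_simps)
  define W where "W = 128 * N * ln P + 32 * c"
  have W0: "W > 0" unfolding W_def using c N lnP by (simp add: add_nonneg_pos)
  have cs_hi: "4 * c * (real s)\<^sup>2 \<le> W"
  proof -
    have "(real s)\<^sup>2 \<le> (sqrt X + 2)\<^sup>2" using s_hi sp by (intro power_mono) auto
    also have "\<dots> \<le> 2 * X + 8"
    proof -
      have e1: "(sqrt X + 2)\<^sup>2 = X + 4 * sqrt X + 4" using X0 by (simp add: power2_eq_square algebra_simps)
      have e2: "(sqrt X - 2)\<^sup>2 = X - 4 * sqrt X + 4" using X0 by (simp add: power2_eq_square algebra_simps)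
      have "0 \<le> (sqrt X - 2)\<^sup>2" by simp
      then show ?thesis unfolding e1 using e2 by linarith
    qed
    finally have "(real s)\<^sup>2 \<le> 2 * X + 8" .
    then have "4 * c * (real s)\<^sup>2 \<le> 4 * c * (2 * X + 8)" using c by simp
    also have "\<dots> = W" unfolding W_def X_def using c by (simp add: field_simps)
    finally show ?thesis .
  qed
  define Y where "Y = P / (4 * c * (real s)\<^sup>2)"
  have cs0: "4 * c * (real s)\<^sup>2 > 0" using c sp by simp
  have Y_lo: "P / W \<le> Y" unfolding Y_def using cs_hi cs0 P1 by (intro divide_left_mono) auto
  have PW: "16 \<le> P / W" using H W0 by (simp add: W_def field_simps)
  have Y16: "16 \<le> Y" using Y_lo PW by simp
  have sqY: "4 \<le> sqrt Y" using Y16 real_sqrt_le_mono[OF Y16] by simp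
  have JY: "real J = real_of_int \<lfloor>sqrt Y\<rfloor>"
  proof -
    have "0 \<le> \<lfloor>sqrt Y\<rfloor>" using Y16 by simp
    then show ?thesis unfolding J_def Y_def[symmetric] by (simp only: of_nat_nat)
  qed
  have J_lo: "sqrt Y - 1 < real J" using JY by linarith
  have J_hi: "real J \<le> sqrt Y" using JY by linarith
  show J1: "J \<ge> 1" using J_lo sqY by linarith
  have J2: "(real J)\<^sup>2 \<le> Y"
  proof -
    have "(real J)\<^sup>2 \<le> (sqrt Y)\<^sup>2" using J_hi by (intro power_mono) auto
    then show ?thesis using Y16 by simp
  qed
  show "4 * c * (real s)\<^sup>2 * (real J)\<^sup>2 \<le> P"
    using J2 cs0 unfolding Y_def by (simp add: field_simps)
  have J_lo2: "sqrt Y / 2 \<le> real J" using J_lo sqY by linarith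
  have JJ_lo: "P / (4 * W) \<le> real (J * J)"
  proof -
    have "(sqrt Y / 2)\<^sup>2 \<le> (real J)\<^sup>2" using J_lo2 sqY Y16 by (intro power_mono) auto
    then have "Y / 4 \<le> (real J)\<^sup>2" using Y16 by (simp add: power_divide)
    then show ?thesis using Y_lo by (simp add: power2_eq_square)
  qed
  have PW0: "P / (4 * W) > 0" using P1 W0 by simp
  define \<delta> where "\<delta> = exp (- (c * (real s)\<^sup>2 / 4 / (4 * N)))"
  have \<delta>_le: "\<delta> \<le> 1 / P"
  proof -
    have "ln P \<le> c * (real s)\<^sup>2 / 4 / (4 * N)" using cs_lo N by (simp add: field_simps)
    then have "\<delta> \<le> exp (- ln P)" unfolding \<delta>_def by simp
    also have "\<dots> = 1 / P" using P1 by (simp add: exp_minus inverse_eq_divide)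
    finally show ?thesis .
  qed
  have JJd: "real (J * J) * \<delta> \<le> 1 / (4 * c)"
  proof -
    have d0: "\<delta> \<ge> 0" unfolding \<delta>_def by simp
    have "real (J * J) * \<delta> \<le> Y * (1 / P)"
      using J2 \<delta>_le d0 Y16 by (intro mult_mono) (auto simp: power2_eq_square)
    also have "\<dots> = 1 / (4 * c * (real s)\<^sup>2)" unfolding Y_def using P1 by simp
    also have "\<dots> \<le> 1 / (4 * c)"
    proof -
      have "4 * c * 1 \<le> 4 * c * (real s)\<^sup>2" using c s1 by (intro mult_left_mono) auto
      then show ?thesis using c cs0 by (intro divide_left_mono) auto
    qed
    finally show ?thesis .
  qed
  have "(ln P - ln (512 * N * ln P + 128 * c)) / ln 2 = log 2 (P / (4 * W))"
    using P1 W0 by (simp add: log_def ln_div W_def algebra_simps)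
  also have "\<dots> \<le> log 2 (real (J * J))"
    using JJ_lo PW0 by simp
  finally have L: "(ln P - ln (512 * N * ln P + 128 * c)) / ln 2 \<le> log 2 (real (J * J))" .
  have "real (J * J) * \<delta> / ln 2 \<le> 1 / (4 * c) / ln 2"
    using JJd by (intro divide_right_mono) auto
  moreover have "1 / (4 * c * ln 2) = 1 / (4 * c) / ln 2" by simp
  ultimately show "(ln P - ln (512 * N * ln P + 128 * c)) / ln 2 - 1 / (4 * c * ln 2)
         \<le> log 2 (real (J * J)) - real (J * J) * exp (- (c * (real s)\<^sup>2 / 4 / (4 * N))) / ln 2"
    using L unfolding \<delta>_def by linarith
qed

lemma ev_good:
  fixes c N :: real assumes "c > 0" "N > 0"
  shows "eventually (\<lambda>P. 1 \<le> P \<and> 16 * (128 * N * ln P + 32 * c) \<le> P \<and> N < P) at_top"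
proof -
  have "eventually (\<lambda>P. 16 * (128 * N * ln P + 32 * c) \<le> P) at_top" using assms by real_asymp
  moreover have "eventually (\<lambda>P::real. 1 \<le> P) at_top" by real_asymp
  moreover have "eventually (\<lambda>P. N < P) at_top" using assms by real_asymp
  ultimately show ?thesis by eventually_elim auto
qed

lemma lim_LB:
  fixes c N :: real assumes "c > 0" "N > 0"
  shows "((\<lambda>P. ((ln P - ln (512 * N * ln P + 128 * c)) / ln 2 - 1 / (4 * c * ln 2)) / log 2 (P / N)) \<longlongrightarrow> 1) at_top"
  using assms by real_asymp

definition sP :: "real \<Rightarrow> real \<Rightarrow> real \<Rightarrow> nat" where
  "sP N c P = nat \<lceil>sqrt (16 * N * ln P / c)\<rceil> + 1"

definition JP :: "real \<Rightarrow> real \<Rightarrow> real \<Rightarrow> nat" where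
  "JP N c P = nat \<lfloor>sqrt (P / (4 * c * (real (sP N c P))\<^sup>2))\<rfloor>"

definition LB :: "real \<Rightarrow> real \<Rightarrow> real \<Rightarrow> real" where
  "LB N c P = (ln P - ln (512 * N * ln P + 128 * c)) / ln 2 - 1 / (4 * c * ln 2)"

definition good :: "real \<Rightarrow> real \<Rightarrow> real \<Rightarrow> bool" where
  "good N c P \<longleftrightarrow> 1 \<le> P \<and> 16 * (128 * N * ln P + 32 * c) \<le> P \<and> N < P"

lemma choice:
  assumes c: "c > 0" and N: "N > 0" and g: "good N c P"
  shows "sP N c P \<ge> 1" "JP N c P \<ge> 1" "4 * c * (real (sP N c P))\<^sup>2 * (real (JP N c P))\<^sup>2 \<le> P"
    "LB N c P \<le> log 2 (real (JP N c P * JP N c P))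
        - real (JP N c P * JP N c P) * exp (- (c * (real (sP N c P))\<^sup>2 / 4 / (4 * N))) / ln 2"
  using cons_choice[OF c N, of P] g unfolding good_def sP_def[symmetric] JP_def[symmetric] LB_def
  by auto

lemma sep_exp:
  assumes c: "c > 0" and N: "N > 0" and J: "J \<ge> 1" and a: "a \<in> cons c s J" and b: "b \<in> cons c s J" and ne: "a \<noteq> b"
  shows "exp (- ((cmod (a * cis (h * (cmod a)\<^sup>2) - b * cis (h * (cmod b)\<^sup>2)))\<^sup>2 / (4 * N)))
     \<le> exp (- (c * (real s)\<^sup>2 / 4 / (4 * N)))"
proof -
  have "c * (real s)\<^sup>2 / 4 \<le> (cmod (a * cis (h * (cmod a)\<^sup>2) - b * cis (h * (cmod b)\<^sup>2)))\<^sup>2"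
    using cons_sep[OF c J a b ne, of h] by (simp add: foc_def)
  then have "c * (real s)\<^sup>2 / 4 / (4 * N) \<le> (cmod (a * cis (h * (cmod a)\<^sup>2) - b * cis (h * (cmod b)\<^sup>2)))\<^sup>2 / (4 * N)"
    using N by (intro divide_right_mono) auto
  then show ?thesis by simp
qed

lemma grid_h:
  assumes h: "h \<noteq> 0" and s: "s \<ge> 1" and J: "J \<ge> 1" and x: "x \<in> cons (2 * pi / \<bar>h\<bar>) s J"
  shows "\<exists>m::nat. (cmod x)\<^sup>2 = 2 * pi * real m / \<bar>h\<bar>"
proof -
  have c: "2 * pi / \<bar>h\<bar> > 0" using h by simp
  obtain m :: nat where "(cmod x)\<^sup>2 = 2 * pi / \<bar>h\<bar> * real m" using cons_grid[OF c s J x] by blast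
  then show ?thesis by auto
qed

lemma rate1_LB:
  fixes h11 h12 h21 N P1 P2 :: real
  assumes N: "N > 0" and h12: "h12 \<noteq> 0" and h21: "h21 \<noteq> 0"
    and g1: "good N (2 * pi / \<bar>h21\<bar>) P1" and g2: "good N (2 * pi / \<bar>h12\<bar>) P2"
  shows "LB N (2 * pi / \<bar>h21\<bar>) P1 \<le> rate1 h11 h12 N 2
      (unif (cons (2 * pi / \<bar>h21\<bar>) (sP N (2 * pi / \<bar>h21\<bar>) P1) (JP N (2 * pi / \<bar>h21\<bar>) P1)))
      (unif (cons (2 * pi / \<bar>h12\<bar>) (sP N (2 * pi / \<bar>h12\<bar>) P2) (JP N (2 * pi / \<bar>h12\<bar>) P2)))"
proof -
  define c1 where "c1 = 2 * pi / \<bar>h21\<bar>"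
  define c2 where "c2 = 2 * pi / \<bar>h12\<bar>"
  have c1: "c1 > 0" using h21 by (simp add: c1_def)
  have c2: "c2 > 0" using h12 by (simp add: c2_def)
  note ch1 = choice[OF c1 N g1[folded c1_def]]
  note ch2 = choice[OF c2 N g2[folded c2_def]]
  define A where "A = cons c1 (sP N c1 P1) (JP N c1 P1)"
  define B where "B = cons c2 (sP N c2 P2) (JP N c2 P2)"
  have A: "finite A" "A \<noteq> {}" using ch1 by (auto simp: A_def finite_cons cons_ne)
  have B: "finite B" "B \<noteq> {}" using ch2 by (auto simp: B_def finite_cons cons_ne)
  have cardA: "card A = JP N c1 P1 * JP N c1 P1" unfolding A_def using c1 ch1 by (intro card_cons) auto
  have "log 2 (card A) - card A * exp (- (c1 * (real (sP N c1 P1))\<^sup>2 / 4 / (4 * N))) / ln 2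
      \<le> rate1 h11 h12 N 2 (unif A) (unif B)"
  proof (rule rate1_bound[OF N h12 A B])
    show "\<exists>m::nat. (cmod x)\<^sup>2 = 2 * pi * real m / \<bar>h12\<bar>" if "x \<in> B" for x
      using grid_h[OF h12 ch2(1) ch2(2)] that unfolding B_def c2_def by blast
    show "0 \<le> exp (- (c1 * (real (sP N c1 P1))\<^sup>2 / 4 / (4 * N)))" by simp
    show "exp (- ((cmod (a * cis (h11 * (cmod a)\<^sup>2) - b * cis (h11 * (cmod b)\<^sup>2)))\<^sup>2 / (4 * N)))
       \<le> exp (- (c1 * (real (sP N c1 P1))\<^sup>2 / 4 / (4 * N)))"
      if "a \<in> A" "b \<in> A" "a \<noteq> b" for a b
      using sep_exp[OF c1 N ch1(2)] that unfolding A_def by blast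
  qed
  then have "LB N c1 P1 \<le> rate1 h11 h12 N 2 (unif A) (unif B)"
    using ch1(4) unfolding cardA by linarith
  then show ?thesis unfolding A_def B_def c1_def c2_def .
qed

lemma rate2_LB:
  fixes h21 h22 h12 N P1 P2 :: real
  assumes N: "N > 0" and h12: "h12 \<noteq> 0" and h21: "h21 \<noteq> 0"
    and g1: "good N (2 * pi / \<bar>h21\<bar>) P1" and g2: "good N (2 * pi / \<bar>h12\<bar>) P2"
  shows "LB N (2 * pi / \<bar>h12\<bar>) P2 \<le> rate2 h21 h22 N 2
      (unif (cons (2 * pi / \<bar>h21\<bar>) (sP N (2 * pi / \<bar>h21\<bar>) P1) (JP N (2 * pi / \<bar>h21\<bar>) P1)))
      (unif (cons (2 * pi / \<bar>h12\<bar>) (sP N (2 * pi / \<bar>h12\<bar>) P2) (JP N (2 * pi / \<bar>h12\<bar>) P2)))"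
proof -
  define c1 where "c1 = 2 * pi / \<bar>h21\<bar>"
  define c2 where "c2 = 2 * pi / \<bar>h12\<bar>"
  have c1: "c1 > 0" using h21 by (simp add: c1_def)
  have c2: "c2 > 0" using h12 by (simp add: c2_def)
  note ch1 = choice[OF c1 N g1[folded c1_def]]
  note ch2 = choice[OF c2 N g2[folded c2_def]]
  define A where "A = cons c1 (sP N c1 P1) (JP N c1 P1)"
  define B where "B = cons c2 (sP N c2 P2) (JP N c2 P2)"
  have A: "finite A" "A \<noteq> {}" using ch1 by (auto simp: A_def finite_cons cons_ne)
  have B: "finite B" "B \<noteq> {}" using ch2 by (auto simp: B_def finite_cons cons_ne)
  have cardB: "card B = JP N c2 P2 * JP N c2 P2" unfolding B_def using c2 ch2 by (intro card_cons) auto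
  have "log 2 (card B) - card B * exp (- (c2 * (real (sP N c2 P2))\<^sup>2 / 4 / (4 * N))) / ln 2
      \<le> rate2 h21 h22 N 2 (unif A) (unif B)"
  proof (rule rate2_bound[OF N h21 A B])
    show "\<exists>m::nat. (cmod x)\<^sup>2 = 2 * pi * real m / \<bar>h21\<bar>" if "x \<in> A" for x
      using grid_h[OF h21 ch1(1) ch1(2)] that unfolding A_def c1_def by blast
    show "0 \<le> exp (- (c2 * (real (sP N c2 P2))\<^sup>2 / 4 / (4 * N)))" by simp
    show "exp (- ((cmod (a * cis (h22 * (cmod a)\<^sup>2) - b * cis (h22 * (cmod b)\<^sup>2)))\<^sup>2 / (4 * N)))
       \<le> exp (- (c2 * (real (sP N c2 P2))\<^sup>2 / 4 / (4 * N)))"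
      if "a \<in> B" "b \<in> B" "a \<noteq> b" for a b
      using sep_exp[OF c2 N ch2(2)] that unfolding B_def by blast
  qed
  then have "LB N c2 P2 \<le> rate2 h21 h22 N 2 (unif A) (unif B)"
    using ch2(4) unfolding cardB by linarith
  then show ?thesis unfolding A_def B_def c1_def c2_def .
qed

theorem mainTheorem5:
  fixes h11 h12 h21 h22 N :: real
  assumes "h12 \<noteq> 0" and "h21 \<noteq> 0" and "N > 0"
  shows "\<exists>\<mu>1 \<mu>2 :: real \<Rightarrow> real \<Rightarrow> complex measure.
    (\<forall>\<^sub>F (P1, P2) in at_top \<times>\<^sub>F at_top.
        admissible (\<mu>1 P1 P2) P1 h21 \<and> admissible (\<mu>2 P1 P2) P2 h12) \<and>
    Liminf (at_top \<times>\<^sub>F at_top)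
      (\<lambda>(P1, P2). ereal (rate1 h11 h12 N 2 (\<mu>1 P1 P2) (\<mu>2 P1 P2) / log 2 (P1 / N))) \<ge> 1 \<and>
    Liminf (at_top \<times>\<^sub>F at_top)
      (\<lambda>(P1, P2). ereal (rate2 h21 h22 N 2 (\<mu>1 P1 P2) (\<mu>2 P1 P2) / log 2 (P2 / N))) \<ge> 1"
proof -
  note h12 = assms(1) and h21 = assms(2) and N = assms(3)
  define c1 where "c1 = 2 * pi / \<bar>h21\<bar>"
  define c2 where "c2 = 2 * pi / \<bar>h12\<bar>"
  have c1: "c1 > 0" using h21 by (simp add: c1_def)
  have c2: "c2 > 0" using h12 by (simp add: c2_def)
  define \<mu>1 where "\<mu>1 = (\<lambda>(P1::real) (P2::real). unif (cons c1 (sP N c1 P1) (JP N c1 P1)))"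
  define \<mu>2 where "\<mu>2 = (\<lambda>(P1::real) (P2::real). unif (cons c2 (sP N c2 P2) (JP N c2 P2)))"
  have ev1: "eventually (good N c1) at_top" using ev_good[OF c1 N] unfolding good_def by simp
  have ev2: "eventually (good N c2) at_top" using ev_good[OF c2 N] unfolding good_def by simp
  have adm: "\<forall>\<^sub>F (P1, P2) in at_top \<times>\<^sub>F at_top.
        admissible (\<mu>1 P1 P2) P1 h21 \<and> admissible (\<mu>2 P1 P2) P2 h12"
    unfolding eventually_prod_filter
  proof (intro exI conjI allI impI)
    show "eventually (good N c1) at_top" "eventually (good N c2) at_top" by (fact ev1, fact ev2)
    fix x y assume gx: "good N c1 x" and gy: "good N c2 y"
    note chx = choice[OF c1 N gx] and chy = choice[OF c2 N gy]
    show "case (x, y) of (P1, P2) \<Rightarrow> admissible (\<mu>1 P1 P2) P1 h21 \<and> admissible (\<mu>2 P1 P2) P2 h12"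
      using admissible_cons[OF h21 chx(1) chx(2)] admissible_cons[OF h12 chy(1) chy(2)] chx(3) chy(3)
      unfolding \<mu>1_def \<mu>2_def c1_def c2_def by simp
  qed
  have L1: "1 \<le> Liminf (at_top \<times>\<^sub>F at_top)
      (\<lambda>(P1, P2). ereal (rate1 h11 h12 N 2 (\<mu>1 P1 P2) (\<mu>2 P1 P2) / log 2 (P1 / N)))"
    unfolding le_Liminf_iff
  proof (intro allI impI)
    fix y :: ereal assume y: "y < 1"
    have lim: "((\<lambda>P. ereal (LB N c1 P / log 2 (P / N))) \<longlongrightarrow> (1::ereal)) at_top"
      unfolding LB_def one_ereal_def by (rule tendsto_ereal[OF lim_LB[OF c1 N]])
    have e: "eventually (\<lambda>P. y < ereal (LB N c1 P / log 2 (P / N))) at_top"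
      using order_tendstoD(1)[OF lim y] .
    show "\<forall>\<^sub>F x in at_top \<times>\<^sub>F at_top. y < (case x of (P1, P2) \<Rightarrow>
        ereal (rate1 h11 h12 N 2 (\<mu>1 P1 P2) (\<mu>2 P1 P2) / log 2 (P1 / N)))"
      unfolding eventually_prod_filter
    proof (intro exI conjI allI impI)
      show "eventually (\<lambda>P. good N c1 P \<and> y < ereal (LB N c1 P / log 2 (P / N))) at_top"
        using ev1 e by eventually_elim auto
      show "eventually (good N c2) at_top" by (fact ev2)
      fix x z assume gx: "good N c1 x \<and> y < ereal (LB N c1 x / log 2 (x / N))" and gz: "good N c2 z"
      have r: "LB N c1 x \<le> rate1 h11 h12 N 2 (\<mu>1 x z) (\<mu>2 x z)"
        using rate1_LB[OF N h12 h21, of x z h11] gx gz unfolding \<mu>1_def \<mu>2_def c1_def c2_def by simp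
      have "N < x" using gx unfolding good_def by simp
      then have lg: "log 2 (x / N) > 0" using N by simp
      have "LB N c1 x / log 2 (x / N) \<le> rate1 h11 h12 N 2 (\<mu>1 x z) (\<mu>2 x z) / log 2 (x / N)"
        using r lg by (intro divide_right_mono) auto
      then have le: "ereal (LB N c1 x / log 2 (x / N)) \<le> ereal (rate1 h11 h12 N 2 (\<mu>1 x z) (\<mu>2 x z) / log 2 (x / N))" by simp
      show "y < (case (x, z) of (P1, P2) \<Rightarrow>
          ereal (rate1 h11 h12 N 2 (\<mu>1 P1 P2) (\<mu>2 P1 P2) / log 2 (P1 / N)))"
        using order_less_le_trans[OF conjunct2[OF gx] le] by simp
    qed
  qed
  have L2: "1 \<le> Liminf (at_top \<times>\<^sub>F at_top)
      (\<lambda>(P1, P2). ereal (rate2 h21 h22 N 2 (\<mu>1 P1 P2) (\<mu>2 P1 P2) / log 2 (P2 / N)))"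
    unfolding le_Liminf_iff
  proof (intro allI impI)
    fix y :: ereal assume y: "y < 1"
    have lim: "((\<lambda>P. ereal (LB N c2 P / log 2 (P / N))) \<longlongrightarrow> (1::ereal)) at_top"
      unfolding LB_def one_ereal_def by (rule tendsto_ereal[OF lim_LB[OF c2 N]])
    have e: "eventually (\<lambda>P. y < ereal (LB N c2 P / log 2 (P / N))) at_top"
      using order_tendstoD(1)[OF lim y] .
    show "\<forall>\<^sub>F x in at_top \<times>\<^sub>F at_top. y < (case x of (P1, P2) \<Rightarrow>
        ereal (rate2 h21 h22 N 2 (\<mu>1 P1 P2) (\<mu>2 P1 P2) / log 2 (P2 / N)))"
      unfolding eventually_prod_filter
    proof (intro exI conjI allI impI)
      show "eventually (good N c1) at_top" by (fact ev1)
      show "eventually (\<lambda>P. good N c2 P \<and> y < ereal (LB N c2 P / log 2 (P / N))) at_top"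
        using ev2 e by eventually_elim auto
      fix x z assume gx: "good N c1 x" and gz: "good N c2 z \<and> y < ereal (LB N c2 z / log 2 (z / N))"
      have r: "LB N c2 z \<le> rate2 h21 h22 N 2 (\<mu>1 x z) (\<mu>2 x z)"
        using rate2_LB[OF N h12 h21, of x z h22] gx gz unfolding \<mu>1_def \<mu>2_def c1_def c2_def by simp
      have "N < z" using gz unfolding good_def by simp
      then have lg: "log 2 (z / N) > 0" using N by simp
      have "LB N c2 z / log 2 (z / N) \<le> rate2 h21 h22 N 2 (\<mu>1 x z) (\<mu>2 x z) / log 2 (z / N)"
        using r lg by (intro divide_right_mono) auto
      then have le: "ereal (LB N c2 z / log 2 (z / N)) \<le> ereal (rate2 h21 h22 N 2 (\<mu>1 x z) (\<mu>2 x z) / log 2 (z / N))" by simp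
      show "y < (case (x, z) of (P1, P2) \<Rightarrow>
          ereal (rate2 h21 h22 N 2 (\<mu>1 P1 P2) (\<mu>2 P1 P2) / log 2 (P2 / N)))"
        using order_less_le_trans[OF conjunct2[OF gz] le] by simp
    qed
  qed
  show ?thesis using adm L1 L2 by blast
qed


end
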